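(* Let $q\ge5$ be odd. The $\mathrm{Un}\Gamma$-lines (lines meeting the twisted cubic $\mathcal{C}$ in exactly one point and contained in no osculating plane) form two orbits under $G_q$, each of size $(q^3-q)/2$, namely $\{\ell_j\varphi:\varphi\in G_q\}$, $j=1,2$, where $P_0=P(0,0,0,1)$, $\ell_1$ is the line through $P_0$ and $P(1,0,1,0)$, $\ell_2$ is the line through $P_0$ and $P(1,0,\rho,0)$, and $\rho$ is a non-square in $\mathbb{F}_q$. Moreover, $\ell_1$ and $\ell_2$ are fixed by the same subgroup of $G_q$, of size $2$, each element of which has a matrix of the form $\begin{pmatrix}1&0&0&0\\0&d&0&0\\0&0&d^2&0\\0&0&0&d^3\end{pmatrix}$, $d\in\{1,-1\}$.
   Context: $\mathrm{PG}(3,q)$ has points $P(x_0,x_1,x_2,x_3)$; $\boldsymbol{\pi}(c_0,c_1,c_2,c_3)$ is the plane $c_0x_0+c_1x_1+c_2x_2+c_3x_3=0$. The twisted cubic is $\mathcal{C}=\{P(t^3,t^2,t,1):t\in\mathbb{F}_q\}\cup\{P(1,0,0,0)\}$; the osculating planes are $\boldsymbol{\pi}(1,-3t,3t^2,-t^3)$, $t\in\mathbb{F}_q$, and $\boldsymbol{\pi}(0,0,0,1)$. $G_q$ is the group of projectivities mapping $\mathcal{C}$ to itself; for $q\ge5$ its elements are $x\mapsto xM$ on row coordinate vectors, $M=\begin{pmatrix} a^3&a^2c&ac^2&c^3\\ 3a^2b&a^2d+2abc&bc^2+2acd&3c^2d\\ 3ab^2&b^2c+2abd&ad^2+2bcd&3cd^2\\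 b^3&b^2d&bd^2&d^3\end{pmatrix}$, $ad-bc\ne0$, up to scalar. *)

theory Defs
  imports Main "HOL-Library.Cardinality"
begin

text \<open>A point P(x) of PG(3,q) is represented by the 1-dimensional
subspace it spans, a line by the 2-dimensional subspace it spans, and a
projectivity by its induced action on subspaces (so matrices differing by a
nonzero scalar give the same element).\<close>

type_synonym 'a vec4 = "'a \<times> 'a \<times> 'a \<times> 'a"

definition vzero :: "'a::field vec4" where
  "vzero = (0, 0, 0, 0)"

fun vadd :: "'a::field vec4 \<Rightarrow> 'a vec4 \<Rightarrow> 'a vec4" where
  "vadd (x0, x1, x2, x3) (y0, y1, y2, y3) = (x0 + y0, x1 + y1, x2 + y2, x3 + y3)"

fun smul :: "'a::field \<Rightarrow> 'a vec4 \<Rightarrow> 'a vec4" where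
  "smul c (x0, x1, x2, x3) = (c * x0, c * x1, c * x2, c * x3)"

fun dot4 :: "'a::field vec4 \<Rightarrow> 'a vec4 \<Rightarrow> 'a" where
  "dot4 (c0, c1, c2, c3) (x0, x1, x2, x3) = c0 * x0 + c1 * x1 + c2 * x2 + c3 * x3"

definition subspaces :: "'a::field vec4 set set" where
  "subspaces = {S. vzero \<in> S \<and> (\<forall>x\<in>S. \<forall>y\<in>S. vadd x y \<in> S) \<and> (\<forall>c. \<forall>x\<in>S. smul c x \<in> S)}"

definition pt :: "'a::field vec4 \<Rightarrow> 'a vec4 set" where
  "pt u = {smul c u | c. True}"

definition span2 :: "'a::field vec4 \<Rightarrow> 'a vec4 \<Rightarrow> 'a vec4 set" where
  "span2 u v = {vadd (smul a u) (smul b v) | a b. True}"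

definition indep2 :: "'a::field vec4 \<Rightarrow> 'a vec4 \<Rightarrow> bool" where
  "indep2 u v \<longleftrightarrow> (\<forall>a b. vadd (smul a u) (smul b v) = vzero \<longrightarrow> a = 0 \<and> b = 0)"

definition lines :: "'a::field vec4 set set" where
  "lines = {span2 u v | u v. indep2 u v}"

definition plane :: "'a::field vec4 \<Rightarrow> 'a vec4 set" where
  "plane c = {x. dot4 c x = 0}"

definition cubic_points :: "'a::field vec4 set set" where
  "cubic_points = {pt (t^3, t^2, t, 1) | t. True} \<union> {pt (1, 0, 0, 0)}"

definition osc_planes :: "'a::field vec4 set set" where
  "osc_planes = {plane (1, - 3 * t, 3 * t^2, - (t^3)) | t. True} \<union> {plane (0, 0, 0, 1)}"

definition UnGamma_lines :: "'a::field vec4 set set" where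
  "UnGamma_lines = {L \<in> lines. card {P \<in> cubic_points. P \<subseteq> L} = 1 \<and>
                                (\<forall>\<pi>\<in>osc_planes. \<not> L \<subseteq> \<pi>)}"

definition Mq :: "'a::field \<Rightarrow> 'a \<Rightarrow> 'a \<Rightarrow> 'a \<Rightarrow> nat \<Rightarrow> nat \<Rightarrow> 'a" where
  "Mq a b c d i j =
     [[a^3,       a^2 * c,                   a * c^2,                   c^3],
      [3*a^2*b,   a^2*d + 2*a*b*c,           b*c^2 + 2*a*c*d,           3*c^2*d],
      [3*a*b^2,   b^2*c + 2*a*b*d,           a*d^2 + 2*b*c*d,           3*c*d^2],
      [b^3,       b^2 * d,                   b * d^2,                   d^3]] ! i ! j"

fun vecmat :: "'a::field vec4 \<Rightarrow> (nat \<Rightarrow> nat \<Rightarrow> 'a) \<Rightarrow> 'a vec4" where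
  "vecmat (x0, x1, x2, x3) M =
     (x0 * M 0 0 + x1 * M 1 0 + x2 * M 2 0 + x3 * M 3 0,
      x0 * M 0 1 + x1 * M 1 1 + x2 * M 2 1 + x3 * M 3 1,
      x0 * M 0 2 + x1 * M 1 2 + x2 * M 2 2 + x3 * M 3 2,
      x0 * M 0 3 + x1 * M 1 3 + x2 * M 2 3 + x3 * M 3 3)"

definition gmap :: "'a::field \<Rightarrow> 'a \<Rightarrow> 'a \<Rightarrow> 'a \<Rightarrow> 'a vec4 set \<Rightarrow> 'a vec4 set" where
  "gmap a b c d = (\<lambda>S. if S \<in> subspaces then (\<lambda>x. vecmat x (Mq a b c d)) ` S else undefined)"

definition Gq :: "('a::field vec4 set \<Rightarrow> 'a vec4 set) set" where
  "Gq = {gmap a b c d | a b c d. a * d - b * c \<noteq> 0}"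

definition Gorbit :: "'a::field vec4 set \<Rightarrow> 'a vec4 set set" where
  "Gorbit L = (\<lambda>\<phi>. \<phi> L) ` Gq"

definition Gstab :: "'a::field vec4 set \<Rightarrow> ('a vec4 set \<Rightarrow> 'a vec4 set) set" where
  "Gstab L = {\<phi> \<in> Gq. \<phi> L = L}"

end

theory Submission
  imports Defs
begin


fun lmt :: "('a::field \<times> 'a \<times> 'a \<times> 'a) \<Rightarrow> 'a vec4 \<Rightarrow> 'a vec4" where
  "lmt (a,b,c,d) x = vecmat x (Mq a b c d)"

fun mm :: "('a::field \<times> 'a \<times> 'a \<times> 'a) \<Rightarrow> ('a \<times> 'a \<times> 'a \<times> 'a) \<Rightarrow> ('a \<times> 'a \<times> 'a \<times> 'a)" where
  "mm (a',b',c',d') (a,b,c,d) = (a'*a+b'*c, a'*b+b'*d, c'*a+d'*c, c'*b+d'*d)"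

fun det2 :: "('a::field \<times> 'a \<times> 'a \<times> 'a) \<Rightarrow> 'a" where
  "det2 (a,b,c,d) = a*d - b*c"

fun adj :: "('a::field \<times> 'a \<times> 'a \<times> 'a) \<Rightarrow> ('a \<times> 'a \<times> 'a \<times> 'a)" where
  "adj (a,b,c,d) = (d,-b,-c,a)"

definition cub2 :: "'a::field \<Rightarrow> 'a \<Rightarrow> 'a vec4" where
  "cub2 x y = (x^3, x^2*y, x*y^2, y^3)"

definition osc2 :: "'a::field \<Rightarrow> 'a \<Rightarrow> 'a vec4" where
  "osc2 x y = (y^3, -3*x*y^2, 3*x^2*y, -(x^3))"

lemma lmt_expl: "lmt (a,b,c,d) (x0,x1,x2,x3) =
     (x0 * a^3 + x1 * (3*a^2*b) + x2 * (3*a*b^2) + x3 * b^3,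
      x0 * (a^2 * c) + x1 * (a^2*d + 2*a*b*c) + x2 * (b^2*c + 2*a*b*d) + x3 * (b^2 * d),
      x0 * (a * c^2) + x1 * (b*c^2 + 2*a*c*d) + x2 * (a*d^2 + 2*b*c*d) + x3 * (b * d^2),
      x0 * c^3 + x1 * (3*c^2*d) + x2 * (3*c*d^2) + x3 * d^3)"
  by (simp add: Mq_def)

declare lmt.simps[simp del]

lemma lmt_comp: "lmt B (lmt A x) = lmt (mm B A) x"
  apply (cases A; cases B; cases x)
  apply (simp only: lmt_expl mm.simps prod.case)
  apply (simp add: algebra_simps power2_eq_square power3_eq_cube)
  done

lemma lmt_cub2: "lmt (a,b,c,d) (cub2 x y) = cub2 (a*x+b*y) (c*x+d*y)"
  by (simp add: lmt_expl cub2_def Mq_def algebra_simps power2_eq_square power3_eq_cube)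

lemma osc_lmt: "dot4 (osc2 (a*x+b*y) (c*x+d*y)) (lmt (a,b,c,d) z) = (a*d-b*c)^3 * dot4 (osc2 x y) z"
  by (cases z) (simp add: lmt_expl osc2_def algebra_simps power2_eq_square power3_eq_cube)


lemma vadd_expl: "vadd x y = (fst x + fst y, fst (snd x) + fst (snd y), fst (snd (snd x)) + fst (snd (snd y)), snd (snd (snd x)) + snd (snd (snd y)))"
  by (cases x rule: prod_cases4; cases y rule: prod_cases4) simp

lemma smul_expl: "smul k x = (k * fst x, k * fst (snd x), k * fst (snd (snd x)), k * snd (snd (snd x)))"
  by (cases x rule: prod_cases4) simp

lemma lmt_vadd: "lmt A (vadd x y) = vadd (lmt A x) (lmt A y)"
  by (cases A rule: prod_cases4; cases x rule: prod_cases4; cases y rule: prod_cases4)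
     (simp add: lmt_expl algebra_simps)

lemma lmt_smul: "lmt A (smul k x) = smul k (lmt A x)"
  by (cases A rule: prod_cases4; cases x rule: prod_cases4)
     (simp add: lmt_expl algebra_simps)

lemma lmt_scalar: "lmt (k,0,0,k) x = smul (k^3) x"
  by (cases x rule: prod_cases4) (simp add: lmt_expl algebra_simps power2_eq_square power3_eq_cube)

lemma lmt_id: "lmt (1,0,0,1) x = x"
  using lmt_scalar[of 1 x] by (cases x rule: prod_cases4) simp

lemma mm_adj: "mm A (adj A) = (det2 A, 0, 0, det2 A)"
  by (cases A rule: prod_cases4) (simp add: algebra_simps)

lemma mm_adj2: "mm (adj A) A = (det2 A, 0, 0, det2 A)"
  by (cases A rule: prod_cases4) (simp add: algebra_simps)

lemma mm_assoc: "mm (mm A B) C = mm A (mm B C)"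
  by (cases A rule: prod_cases4; cases B rule: prod_cases4; cases C rule: prod_cases4)
     (simp add: algebra_simps)

lemma det2_mm: "det2 (mm A B) = det2 A * det2 B"
  by (cases A rule: prod_cases4; cases B rule: prod_cases4) (simp add: algebra_simps)

lemma det2_adj: "det2 (adj A) = det2 A"
  by (cases A rule: prod_cases4) (simp add: algebra_simps)

lemma lmt_adj1: "lmt (adj A) (lmt A x) = smul (det2 A ^ 3) x"
  by (simp add: lmt_comp mm_adj2 lmt_scalar)

lemma lmt_adj2: "lmt A (lmt (adj A) x) = smul (det2 A ^ 3) x"
  by (simp add: lmt_comp mm_adj lmt_scalar)

lemma smul_smul: "smul a (smul b x) = smul (a*b) x"
  by (cases x rule: prod_cases4) simp

lemma smul_one: "smul 1 x = x"
  by (cases x rule: prod_cases4) simp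

lemma smul_cancel: "k \<noteq> 0 \<Longrightarrow> smul k x = smul k y \<Longrightarrow> x = y"
  by (cases x rule: prod_cases4; cases y rule: prod_cases4) simp


lemma lmt_inj: assumes "det2 A \<noteq> 0" shows "inj (lmt A)"
proof (rule injI)
  fix x y assume "lmt A x = lmt A y"
  then have "lmt (adj A) (lmt A x) = lmt (adj A) (lmt A y)" by (rule arg_cong)
  then have "smul (det2 A ^ 3) x = smul (det2 A ^ 3) y" by (simp only: lmt_adj1)
  then show "x = y" using assms smul_cancel[of "det2 A ^ 3" x y] by simp
qed

lemma lmt_surj: "det2 A \<noteq> 0 \<Longrightarrow> \<exists>x. lmt A x = y"
  apply (rule exI[of _ "smul (inverse (det2 A ^ 3)) (lmt (adj A) y)"])
  by (simp only: lmt_smul lmt_adj2 smul_smul) (simp add: smul_one)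
lemma in_span2: "x \<in> span2 u v \<longleftrightarrow> (\<exists>a b. x = vadd (smul a u) (smul b v))"
  unfolding span2_def by auto

lemma span2_sub: "span2 u v \<in> subspaces"
  unfolding subspaces_def mem_Collect_eq
proof (intro conjI ballI allI)
  show "vzero \<in> span2 u v" unfolding in_span2
    by (rule exI[of _ 0], rule exI[of _ 0])
       (cases u rule: prod_cases4; cases v rule: prod_cases4; simp add: vzero_def)
next
  fix x y assume "x \<in> span2 u v" "y \<in> span2 u v"
  then obtain a b a' b' where "x = vadd (smul a u) (smul b v)" "y = vadd (smul a' u) (smul b' v)"
    unfolding in_span2 by blast
  then show "vadd x y \<in> span2 u v" unfolding in_span2
    by (rule_tac exI[of _ "a+a'"], rule_tac exI[of _ "b+b'"])
       (cases u rule: prod_cases4; cases v rule: prod_cases4; simp add: algebra_simps)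
next
  fix c x assume "x \<in> span2 u v"
  then obtain a b where "x = vadd (smul a u) (smul b v)" unfolding in_span2 by blast
  then show "smul c x \<in> span2 u v" unfolding in_span2
    by (rule_tac exI[of _ "c*a"], rule_tac exI[of _ "c*b"])
       (cases u rule: prod_cases4; cases v rule: prod_cases4; simp add: algebra_simps)
qed

lemma sub_smul: "S \<in> subspaces \<Longrightarrow> x \<in> S \<Longrightarrow> smul c x \<in> S"
  unfolding subspaces_def by blast

lemma sub_vadd: "S \<in> subspaces \<Longrightarrow> x \<in> S \<Longrightarrow> y \<in> S \<Longrightarrow> vadd x y \<in> S"
  unfolding subspaces_def by blast

lemma smul_image: "S \<in> subspaces \<Longrightarrow> k \<noteq> 0 \<Longrightarrow> smul k ` S = S"
proof (intro equalityI subsetI)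
  fix x assume "S \<in> subspaces" "k \<noteq> 0" "x \<in> S"
  then have "smul (inverse k) x \<in> S" by (simp add: sub_smul)
  moreover have "x = smul k (smul (inverse k) x)" using \<open>k \<noteq> 0\<close> by (simp add: smul_smul smul_one)
  ultimately show "x \<in> smul k ` S" by blast
next
  fix x assume "S \<in> subspaces" "k \<noteq> 0" "x \<in> smul k ` S"
  then show "x \<in> S" using sub_smul by blast
qed

lemma lmt_image_span2: "lmt A ` span2 u v = span2 (lmt A u) (lmt A v)"
proof (intro equalityI subsetI)
  fix x assume "x \<in> lmt A ` span2 u v"
  then obtain y where y: "y \<in> span2 u v" "x = lmt A y" by blast
  then obtain a b where "x = lmt A (vadd (smul a u) (smul b v))" unfolding in_span2 by blast
  then have "x = vadd (smul a (lmt A u)) (smul b (lmt A v))" by (simp add: lmt_vadd lmt_smul)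
  then show "x \<in> span2 (lmt A u) (lmt A v)" unfolding in_span2 by blast
next
  fix x assume "x \<in> span2 (lmt A u) (lmt A v)"
  then obtain a b where "x = vadd (smul a (lmt A u)) (smul b (lmt A v))" unfolding in_span2 by blast
  then have "x = lmt A (vadd (smul a u) (smul b v))" by (simp add: lmt_vadd lmt_smul)
  moreover have "vadd (smul a u) (smul b v) \<in> span2 u v" unfolding in_span2 by blast
  ultimately show "x \<in> lmt A ` span2 u v" by blast
qed

lemma lines_sub: "L \<in> lines \<Longrightarrow> L \<in> subspaces"
  unfolding lines_def using span2_sub by blast

lemma lmt_scale_image: "S \<in> subspaces \<Longrightarrow> k \<noteq> 0 \<Longrightarrow> lmt (k,0,0,k) ` S = S"
  by (simp add: lmt_scalar smul_image)

lemma lmt_adj_image: "S \<in> subspaces \<Longrightarrow> det2 A \<noteq> 0 \<Longrightarrow> lmt (adj A) ` lmt A ` S = S"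
  by (simp add: image_image lmt_adj1 smul_image)

lemma lmt_adj_image2: "S \<in> subspaces \<Longrightarrow> det2 A \<noteq> 0 \<Longrightarrow> lmt A ` lmt (adj A) ` S = S"
  by (simp add: image_image lmt_adj2 smul_image)

lemma span2_change: assumes "k \<noteq> 0" shows "span2 (smul k u) (vadd w (smul m u)) = span2 u w"
proof (intro equalityI subsetI)
  fix x assume "x \<in> span2 (smul k u) (vadd w (smul m u))"
  then obtain a b where "x = vadd (smul a (smul k u)) (smul b (vadd w (smul m u)))" unfolding in_span2 by blast
  then show "x \<in> span2 u w" unfolding in_span2
    by (rule_tac exI[of _ "a*k+b*m"], rule_tac exI[of _ b])
       (cases u rule: prod_cases4; cases w rule: prod_cases4; simp add: algebra_simps)
next
  fix x assume "x \<in> span2 u w"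
  then obtain a b where "x = vadd (smul a u) (smul b w)" unfolding in_span2 by blast
  then show "x \<in> span2 (smul k u) (vadd w (smul m u))" unfolding in_span2 using assms
    by (rule_tac exI[of _ "(a - b*m)/k"], rule_tac exI[of _ b])
       (cases u rule: prod_cases4; cases w rule: prod_cases4; simp add: field_simps)
qed

lemma gmap_eq: "S \<in> subspaces \<Longrightarrow> gmap a b c d S = lmt (a,b,c,d) ` S"
  by (simp add: gmap_def lmt.simps)

lemma pt_smul: assumes "k \<noteq> 0" shows "pt (smul k w) = pt w"
  unfolding pt_def
proof (intro equalityI subsetI)
  fix x assume "x \<in> {smul c (smul k w) |c. True}"
  then show "x \<in> {smul c w |c. True}" by (auto simp: smul_smul)
next
  fix x assume "x \<in> {smul c w |c. True}"
  then obtain c where "x = smul c w" by blast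
  then have "x = smul (c / k) (smul k w)" using assms by (simp add: smul_smul)
  then show "x \<in> {smul c (smul k w) |c. True}" by blast
qed

lemma lmt_pt: "lmt A ` pt w = pt (lmt A w)"
proof (intro equalityI subsetI)
  fix x assume "x \<in> lmt A ` pt w"
  then obtain y where "y \<in> pt w" "x = lmt A y" by blast
  then obtain c where "x = lmt A (smul c w)" unfolding pt_def by blast
  then have "x = smul c (lmt A w)" by (simp add: lmt_smul)
  then show "x \<in> pt (lmt A w)" unfolding pt_def by blast
next
  fix x assume "x \<in> pt (lmt A w)"
  then obtain c where "x = smul c (lmt A w)" unfolding pt_def by blast
  then have "x = lmt A (smul c w)" by (simp add: lmt_smul)
  moreover have "smul c w \<in> pt w" unfolding pt_def by blast
  ultimately show "x \<in> lmt A ` pt w" by blast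
qed

lemma in_pt: "x \<in> pt w \<longleftrightarrow> (\<exists>c. x = smul c w)"
  unfolding pt_def by blast

lemma pt_self: "w \<in> pt w"
  unfolding in_pt by (rule exI[of _ 1]) (simp add: smul_one)

lemma pt_sub_iff: assumes "S \<in> subspaces" shows "pt w \<subseteq> S \<longleftrightarrow> w \<in> S"
proof
  assume "pt w \<subseteq> S" then show "w \<in> S" using pt_self[of w] by blast
next
  assume "w \<in> S"
  show "pt w \<subseteq> S"
  proof
    fix x assume "x \<in> pt w"
    then obtain c where "x = smul c w" unfolding in_pt by blast
    then show "x \<in> S" using sub_smul[OF assms \<open>w \<in> S\<close>] by simp
  qed
qed

lemma pt_sub: "pt w \<in> subspaces"
proof -
  have "pt w = span2 w w" unfolding in_pt in_span2 set_eq_iff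
  proof (intro allI iffI)
    fix x assume "\<exists>c. x = smul c w"
    then obtain c where "x = smul c w" by blast
    then show "\<exists>a b. x = vadd (smul a w) (smul b w)"
      by (rule_tac exI[of _ c], rule_tac exI[of _ 0]) (cases w rule: prod_cases4; simp)
  next
    fix x assume "\<exists>a b. x = vadd (smul a w) (smul b w)"
    then obtain a b where "x = vadd (smul a w) (smul b w)" by blast
    then show "\<exists>c. x = smul c w"
      by (rule_tac exI[of _ "a+b"]) (cases w rule: prod_cases4; simp add: algebra_simps)
  qed
  then show ?thesis using span2_sub by simp
qed


lemma cub2_scale: "cub2 (k*x) (k*y) = smul (k^3) (cub2 x y)"
  by (simp add: cub2_def algebra_simps power2_eq_square power3_eq_cube)

lemma osc2_scale: "osc2 (k*x) (k*y) = smul (k^3) (osc2 x y)"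
  by (simp add: osc2_def algebra_simps power2_eq_square power3_eq_cube)

lemma dot4_smul: "dot4 (smul k c) z = k * dot4 c z"
  by (cases c rule: prod_cases4; cases z rule: prod_cases4) (simp add: algebra_simps)

lemma plane_smul: "k \<noteq> 0 \<Longrightarrow> plane (smul k c) = plane c"
  unfolding plane_def by (simp add: dot4_smul)

lemma cub_mem: "(x,y) \<noteq> (0,0) \<Longrightarrow> pt (cub2 x y) \<in> {pt (cub2 x y) | x y. (x,y) \<noteq> (0,0)}"
  by blast

lemma osc_mem: "(x,y) \<noteq> (0,0) \<Longrightarrow> plane (osc2 x y) \<in> {plane (osc2 x y) | x y. (x,y) \<noteq> (0,0)}"
  by blast

lemma cubic_homog: "(cubic_points :: 'a::field vec4 set set) = {pt (cub2 x y) | x y. (x,y) \<noteq> (0,0)}"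
proof (intro equalityI subsetI)
  fix P :: "'a vec4 set" assume "P \<in> cubic_points"
  then consider t where "P = pt (t^3, t^2, t, 1)" | "P = pt (1,0,0,0)" unfolding cubic_points_def by blast
  then show "P \<in> {pt (cub2 x y) | x y. (x,y) \<noteq> (0,0)}"
  proof cases
    case (1 t)
    then have "P = pt (cub2 t 1)" by (simp add: cub2_def)
    then show ?thesis using cub_mem[of t 1] by simp
  next
    case 2
    then have "P = pt (cub2 1 0)" by (simp add: cub2_def)
    then show ?thesis using cub_mem[of 1 0] by simp
  qed
next
  fix P :: "'a vec4 set" assume "P \<in> {pt (cub2 x y) | x y. (x,y) \<noteq> (0,0)}"
  then obtain x y where P: "P = pt (cub2 x y)" "(x,y) \<noteq> (0,0)" by blast
  show "P \<in> cubic_points"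
  proof (cases "y = 0")
    case True
    then have "x \<noteq> 0" using P by simp
    have "cub2 x y = smul (x^3) (1,0,0,0)" using True by (simp add: cub2_def)
    then have "P = pt (smul (x^3) (1,0,0,0))" using P by simp
    also have "\<dots> = pt (1,0,0,0)" using \<open>x \<noteq> 0\<close> by (intro pt_smul) simp
    finally have "P = pt (1,0,0,0)" .
    then show ?thesis unfolding cubic_points_def by blast
  next
    case False
    have "cub2 x y = cub2 (y * (x/y)) (y * 1)" using False by simp
    also have "\<dots> = smul (y^3) (cub2 (x/y) 1)" by (rule cub2_scale)
    finally have "P = pt (smul (y^3) (cub2 (x/y) 1))" using P by simp
    also have "\<dots> = pt (cub2 (x/y) 1)" using False by (intro pt_smul) simp
    finally have "P = pt (cub2 (x/y) 1)" .
    then have "P = pt ((x/y)^3, (x/y)^2, x/y, 1)" by (simp add: cub2_def)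
    then show ?thesis unfolding cubic_points_def by blast
  qed
qed

lemma osc_homog: "(osc_planes :: 'a::field vec4 set set) = {plane (osc2 x y) | x y. (x,y) \<noteq> (0,0)}"
proof (intro equalityI subsetI)
  fix P :: "'a vec4 set" assume "P \<in> osc_planes"
  then consider t where "P = plane (1, - 3 * t, 3 * t^2, - (t^3))" | "P = plane (0,0,0,1)" unfolding osc_planes_def by blast
  then show "P \<in> {plane (osc2 x y) | x y. (x,y) \<noteq> (0,0)}"
  proof cases
    case (1 t)
    then have "P = plane (osc2 t 1)" by (simp add: osc2_def)
    then show ?thesis using osc_mem[of t 1] by simp
  next
    case 2
    have "osc2 1 0 = smul (-1) (0,0,0,1::'a)" by (simp add: osc2_def)
    then have "plane (osc2 1 0) = plane (smul (-1) (0,0,0,1::'a))" by simp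
    also have "\<dots> = plane (0,0,0,1)" by (intro plane_smul) simp
    finally have "P = plane (osc2 1 0)" using 2 by simp
    then show ?thesis using osc_mem[of 1 0] by simp
  qed
next
  fix P :: "'a vec4 set" assume "P \<in> {plane (osc2 x y) | x y. (x,y) \<noteq> (0,0)}"
  then obtain x y where P: "P = plane (osc2 x y)" "(x,y) \<noteq> (0,0)" by blast
  show "P \<in> osc_planes"
  proof (cases "y = 0")
    case True
    then have "x \<noteq> 0" using P by simp
    have "osc2 x y = smul (-(x^3)) (0,0,0,1)" using True by (simp add: osc2_def)
    then have "P = plane (smul (-(x^3)) (0,0,0,1))" using P by simp
    also have "\<dots> = plane (0,0,0,1)" using \<open>x \<noteq> 0\<close> by (intro plane_smul) simp
    finally have "P = plane (0,0,0,1)" .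
    then show ?thesis unfolding osc_planes_def by blast
  next
    case False
    have "osc2 x y = osc2 (y * (x/y)) (y * 1)" using False by simp
    also have "\<dots> = smul (y^3) (osc2 (x/y) 1)" by (rule osc2_scale)
    finally have "P = plane (smul (y^3) (osc2 (x/y) 1))" using P by simp
    also have "\<dots> = plane (osc2 (x/y) 1)" using False by (intro plane_smul) simp
    finally have "P = plane (osc2 (x/y) 1)" .
    then have "P = plane (1, - 3 * (x/y), 3 * (x/y)^2, - ((x/y)^3))" by (simp add: osc2_def)
    then show ?thesis unfolding osc_planes_def by blast
  qed
qed


lemma lmt_vzero: "lmt A vzero = vzero"
  by (cases A rule: prod_cases4) (simp add: vzero_def lmt_expl)

lemma nz_pair: assumes "a*d-b*c \<noteq> 0" "(x,y) \<noteq> (0,0)"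
  shows "(a*x+b*y, c*x+d*y) \<noteq> (0::'a::field, 0)"
proof
  assume h: "(a*x+b*y, c*x+d*y) = (0, 0)"
  have "(a*d-b*c)*x = d*(a*x+b*y) - b*(c*x+d*y)" "(a*d-b*c)*y = a*(c*x+d*y) - c*(a*x+b*y)"
    by (simp_all add: algebra_simps)
  then have "(a*d-b*c)*x = 0" "(a*d-b*c)*y = 0" using h by simp_all
  then show False using assms by simp
qed

lemma nz_pair_adj: assumes "a*d-b*c \<noteq> 0" "(x,y) \<noteq> (0,0)"
  shows "(d*x-b*y, -c*x+a*y) \<noteq> (0::'a::field, 0)"
  using nz_pair[of d a "-b" "-c" x y] assms by (simp add: algebra_simps)

lemma adj_back: "(a*(d*x-b*y) + b*(-c*x+a*y)) = (a*d-b*c)*x" "(c*(d*x-b*y) + d*(-c*x+a*y)) = (a*d-b*c)*(y::'a::field)"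
  by (simp_all add: algebra_simps)

lemma cubic_lmt: assumes "a*d-b*c \<noteq> 0" "P \<in> cubic_points"
  shows "lmt (a,b,c,d) ` P \<in> cubic_points"
proof -
  obtain x y where P: "P = pt (cub2 x y)" "(x,y) \<noteq> (0,0)" using assms(2) unfolding cubic_homog by blast
  have "lmt (a,b,c,d) ` P = pt (cub2 (a*x+b*y) (c*x+d*y))" using P by (simp add: lmt_pt lmt_cub2)
  then show ?thesis unfolding cubic_homog using cub_mem[OF nz_pair[OF assms(1) P(2)]] by simp
qed

lemma cubic_lmt_pre: assumes "a*d-b*c \<noteq> 0" "Q \<in> cubic_points"
  shows "\<exists>P\<in>cubic_points. lmt (a,b,c,d) ` P = Q"
proof -
  obtain x y where Q: "Q = pt (cub2 x y)" "(x,y) \<noteq> (0,0)" using assms(2) unfolding cubic_homog by blast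
  let ?P = "pt (cub2 (d*x-b*y) (-c*x+a*y))"
  have "?P \<in> cubic_points" unfolding cubic_homog by (rule cub_mem[OF nz_pair_adj[OF assms(1) Q(2)]])
  moreover have "lmt (a,b,c,d) ` ?P = pt (cub2 ((a*d-b*c)*x) ((a*d-b*c)*y))"
    by (simp only: lmt_pt lmt_cub2 adj_back)
  moreover have "\<dots> = pt (smul ((a*d-b*c)^3) (cub2 x y))" by (simp only: cub2_scale)
  moreover have "\<dots> = Q" using Q assms(1) by (simp only:) (intro pt_smul, simp)
  ultimately show ?thesis by metis
qed

lemma osc_lmt_pre: assumes "a*d-b*c \<noteq> 0" "lmt (a,b,c,d) ` L \<subseteq> plane (osc2 x y)"
  shows "L \<subseteq> plane (osc2 (d*x-b*y) (-c*x+a*y))"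
proof
  fix z assume "z \<in> L"
  then have "dot4 (osc2 x y) (lmt (a,b,c,d) z) = 0" using assms(2) unfolding plane_def by blast
  moreover have "dot4 (osc2 (a*(d*x-b*y) + b*(-c*x+a*y)) (c*(d*x-b*y) + d*(-c*x+a*y))) (lmt (a,b,c,d) z)
      = (a*d-b*c)^3 * dot4 (osc2 (d*x-b*y) (-c*x+a*y)) z" by (rule osc_lmt)
  moreover have "osc2 (a*(d*x-b*y) + b*(-c*x+a*y)) (c*(d*x-b*y) + d*(-c*x+a*y)) = smul ((a*d-b*c)^3) (osc2 x y)"
    by (simp only: adj_back osc2_scale)
  ultimately have "(a*d-b*c)^3 * dot4 (osc2 (d*x-b*y) (-c*x+a*y)) z = 0" by (simp add: dot4_smul)
  then show "z \<in> plane (osc2 (d*x-b*y) (-c*x+a*y))" using assms(1) unfolding plane_def by simp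
qed

lemma lines_lmt: assumes "a*d-b*c \<noteq> 0" "L \<in> lines" shows "lmt (a,b,c,d) ` L \<in> lines"
proof -
  let ?f = "lmt (a,b,c,d)"
  have dA: "det2 (a,b,c,d) \<noteq> 0" using assms by simp
  obtain u v where L: "L = span2 u v" "indep2 u v" using assms(2) unfolding lines_def by blast
  have "indep2 (?f u) (?f v)" unfolding indep2_def
  proof (intro allI impI)
    fix s t assume "vadd (smul s (?f u)) (smul t (?f v)) = vzero"
    then have "?f (vadd (smul s u) (smul t v)) = ?f vzero" by (simp add: lmt_vadd lmt_smul lmt_vzero)
    then have "vadd (smul s u) (smul t v) = vzero" using lmt_inj[OF dA] by (simp add: inj_eq)
    then show "s = 0 \<and> t = 0" using L(2) unfolding indep2_def by blast
  qed
  then show ?thesis unfolding lines_def L(1) lmt_image_span2 by blast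
qed

lemma unGamma_lmt: assumes "a*d-b*c \<noteq> 0" "L \<in> UnGamma_lines"
  shows "lmt (a,b,c,d) ` L \<in> UnGamma_lines"
proof -
  let ?f = "lmt (a,b,c,d)"
  have dA: "det2 (a,b,c,d) \<noteq> 0" using assms by simp
  have inj: "inj ?f" by (rule lmt_inj[OF dA])
  have L: "L \<in> lines" "card {P \<in> cubic_points. P \<subseteq> L} = 1" "\<forall>\<pi>\<in>osc_planes. \<not> L \<subseteq> \<pi>"
    using assms(2) unfolding UnGamma_lines_def by blast+
  have eq: "{Q \<in> cubic_points. Q \<subseteq> ?f ` L} = image ?f ` {P \<in> cubic_points. P \<subseteq> L}"
  proof (intro equalityI subsetI)
    fix Q assume "Q \<in> {Q \<in> cubic_points. Q \<subseteq> ?f ` L}"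
    then have Q: "Q \<in> cubic_points" "Q \<subseteq> ?f ` L" by blast+
    obtain P where P: "P \<in> cubic_points" "?f ` P = Q" using cubic_lmt_pre[OF assms(1) Q(1)] by blast
    have "?f ` P \<subseteq> ?f ` L" using Q(2) P(2) by simp
    then have "P \<subseteq> L" using inj_image_subset_iff[OF inj] by blast
    then show "Q \<in> image ?f ` {P \<in> cubic_points. P \<subseteq> L}" using P by blast
  next
    fix Q assume "Q \<in> image ?f ` {P \<in> cubic_points. P \<subseteq> L}"
    then obtain P where P: "P \<in> cubic_points" "P \<subseteq> L" "Q = ?f ` P" by blast
    then show "Q \<in> {Q \<in> cubic_points. Q \<subseteq> ?f ` L}" using cubic_lmt[OF assms(1) P(1)] by blast
  qed
  have "inj_on (image ?f) {P \<in> cubic_points. P \<subseteq> L}"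
    using inj by (simp add: inj_on_def inj_image_eq_iff)
  then have c: "card {Q \<in> cubic_points. Q \<subseteq> ?f ` L} = 1" using L(2) by (simp add: eq card_image)
  have o: "\<forall>\<pi>\<in>osc_planes. \<not> ?f ` L \<subseteq> \<pi>"
  proof (intro ballI notI)
    fix \<pi> assume "\<pi> \<in> osc_planes" "?f ` L \<subseteq> \<pi>"
    then obtain x y where xy: "\<pi> = plane (osc2 x y)" "(x,y) \<noteq> (0,0)" unfolding osc_homog by blast
    have "L \<subseteq> plane (osc2 (d*x-b*y) (-c*x+a*y))" using osc_lmt_pre[OF assms(1)] \<open>?f ` L \<subseteq> \<pi>\<close> xy(1) by blast
    moreover have "plane (osc2 (d*x-b*y) (-c*x+a*y)) \<in> osc_planes"
      unfolding osc_homog by (rule osc_mem[OF nz_pair_adj[OF assms(1) xy(2)]])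
    ultimately show False using L(3) by blast
  qed
  show ?thesis unfolding UnGamma_lines_def using lines_lmt[OF assms(1) L(1)] c o by blast
qed


lemma span2_gen: assumes "k \<noteq> 0" "l \<noteq> 0"
  shows "span2 (smul k u) (vadd (smul l w) (smul m u)) = span2 u w"
proof (intro equalityI subsetI)
  fix x assume "x \<in> span2 (smul k u) (vadd (smul l w) (smul m u))"
  then obtain a b where "x = vadd (smul a (smul k u)) (smul b (vadd (smul l w) (smul m u)))" unfolding in_span2 by blast
  then show "x \<in> span2 u w" unfolding in_span2
    by (rule_tac exI[of _ "a*k+b*m"], rule_tac exI[of _ "b*l"])
       (cases u rule: prod_cases4; cases w rule: prod_cases4; simp add: algebra_simps)
next
  fix x assume "x \<in> span2 u w"
  then obtain a b where "x = vadd (smul a u) (smul b w)" unfolding in_span2 by blast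
  then show "x \<in> span2 (smul k u) (vadd (smul l w) (smul m u))" unfolding in_span2 using assms
    by (rule_tac exI[of _ "(a - (b/l)*m)/k"], rule_tac exI[of _ "b/l"])
       (cases u rule: prod_cases4; cases w rule: prod_cases4; simp add: field_simps)
qed

lemma vadd_comm: "vadd x y = vadd y x"
  by (cases x rule: prod_cases4; cases y rule: prod_cases4) (simp add: add.commute)

lemma span2_swap: "span2 u w = span2 w u"
  unfolding set_eq_iff in_span2 by (metis vadd_comm)

lemma in_lineP0: "(x0,x1,x2,x3) \<in> span2 (0,0,0,1) (1,v1,v2,0) \<longleftrightarrow> x1 = x0*v1 \<and> x2 = x0*v2"
proof
  assume "(x0,x1,x2,x3) \<in> span2 (0,0,0,1) (1,v1,v2,0)"
  then obtain a b where "(x0,x1,x2,x3) = vadd (smul a (0,0,0,1)) (smul b (1,v1,v2,0))" unfolding in_span2 by blast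
  then show "x1 = x0*v1 \<and> x2 = x0*v2" by simp
next
  assume "x1 = x0*v1 \<and> x2 = x0*v2"
  then have "(x0,x1,x2,x3) = vadd (smul x3 (0,0,0,1)) (smul x0 (1,v1,v2,0))" by simp
  then show "(x0,x1,x2,x3) \<in> span2 (0,0,0,1) (1,v1,v2,0)" unfolding in_span2 by blast
qed


lemma cub2_in_lineP0: "cub2 x y \<in> span2 (0,0,0,1) (1,v1,v2,0) \<longleftrightarrow> x^2*y = x^3*v1 \<and> x*y^2 = x^3*v2"
  unfolding cub2_def in_lineP0 by simp

lemma pt_P0_cubic: "pt (0,0,0,1::'a::field) \<in> cubic_points"
proof -
  have "pt (cub2 0 (1::'a)) \<in> cubic_points" unfolding cubic_homog by (rule cub_mem) simp
  then show ?thesis by (simp add: cub2_def)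
qed

lemma lineP0_UnGamma: assumes "v2 \<noteq> v1^2"
  shows "span2 (0,0,0,1) (1,v1,v2,0::'a::field) \<in> UnGamma_lines"
proof -
  let ?L = "span2 (0,0,0,1) (1,v1,v2,0::'a)"
  have sub: "?L \<in> subspaces" by (rule span2_sub)
  have "indep2 (0,0,0,1) (1,v1,v2,0::'a)" unfolding indep2_def by (simp add: vzero_def)
  then have line: "?L \<in> lines" unfolding lines_def by blast
  have "{P \<in> cubic_points. P \<subseteq> ?L} = {pt (0,0,0,1)}"
  proof (intro equalityI subsetI)
    fix P assume "P \<in> {P \<in> cubic_points. P \<subseteq> ?L}"
    then have P: "P \<in> cubic_points" "P \<subseteq> ?L" by blast+
    obtain x y where xy: "P = pt (cub2 x y)" "(x,y) \<noteq> (0,0)" using P(1) unfolding cubic_homog by blast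
    have "cub2 x y \<in> ?L" using P(2) xy(1) pt_sub_iff[OF sub] by simp
    then have e: "x^2*y = x^3*v1" "x*y^2 = x^3*v2" unfolding cub2_in_lineP0 by blast+
    have "x = 0"
    proof (rule ccontr)
      assume "x \<noteq> 0"
      then have "y = x*v1" using e(1) by (simp add: power2_eq_square power3_eq_cube)
      then have "x*(x*v1)^2 = x^3*v2" using e(2) by simp
      then have "x^3 * v1^2 = x^3*v2" by (simp add: algebra_simps power2_eq_square power3_eq_cube)
      then show False using \<open>x \<noteq> 0\<close> assms by simp
    qed
    then have "y \<noteq> 0" using xy(2) by simp
    have "cub2 x y = smul (y^3) (0,0,0,1)" using \<open>x = 0\<close> by (simp add: cub2_def)
    then have "P = pt (smul (y^3) (0,0,0,1))" using xy(1) by simp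
    also have "\<dots> = pt (0,0,0,1)" using \<open>y \<noteq> 0\<close> by (intro pt_smul) simp
    finally show "P \<in> {pt (0,0,0,1)}" by simp
  next
    fix P assume "P \<in> {pt (0,0,0,1::'a)}"
    then have "P = pt (0,0,0,1)" by simp
    moreover have "pt (0,0,0,1) \<subseteq> ?L" unfolding pt_sub_iff[OF sub] in_lineP0 by simp
    ultimately show "P \<in> {P \<in> cubic_points. P \<subseteq> ?L}" using pt_P0_cubic by blast
  qed
  then have c: "card {P \<in> cubic_points. P \<subseteq> ?L} = 1" by simp
  have o: "\<forall>\<pi>\<in>osc_planes. \<not> ?L \<subseteq> \<pi>"
  proof (intro ballI notI)
    fix \<pi> assume "\<pi> \<in> osc_planes" "?L \<subseteq> \<pi>"
    then obtain x y where xy: "\<pi> = plane (osc2 x y)" "(x,y) \<noteq> (0,0)" unfolding osc_homog by blast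
    have "(0,0,0,1) \<in> ?L" "(1,v1,v2,0) \<in> ?L" unfolding in_lineP0 by simp_all
    then have "(0,0,0,1) \<in> \<pi>" "(1,v1,v2,0) \<in> \<pi>" using \<open>?L \<subseteq> \<pi>\<close> by blast+
    then have h: "dot4 (osc2 x y) (0,0,0,1) = 0" "dot4 (osc2 x y) (1,v1,v2,0) = 0"
      using xy(1) unfolding plane_def by simp_all
    from h(1) have "x = 0" by (simp add: osc2_def)
    then have "y \<noteq> 0" using xy(2) by simp
    from h(2) \<open>x = 0\<close> have "y^3 = 0" by (simp add: osc2_def)
    then show False using \<open>y \<noteq> 0\<close> by simp
  qed
  show ?thesis unfolding UnGamma_lines_def using line c o by blast
qed

lemma lineP0_form:
  assumes "L \<in> lines" "(0,0,0,1) \<in> L"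
  shows "\<exists>w. L = span2 (0,0,0,1::'a::field) w"
proof -
  obtain u w where L: "L = span2 u w" "indep2 u w" using assms(1) unfolding lines_def by blast
  have "(0,0,0,1) \<in> span2 u w" using assms(2) L(1) by simp
  then obtain \<alpha> \<beta> where ab: "(0,0,0,1) = vadd (smul \<alpha> u) (smul \<beta> w)" unfolding in_span2 by blast
  show ?thesis
  proof (cases "\<beta> = 0")
    case False
    have "L = span2 (smul 1 u) (vadd (smul \<beta> w) (smul \<alpha> u))" using L(1) False by (simp add: span2_gen)
    also have "\<dots> = span2 u (0,0,0,1)" using ab by (simp add: smul_one vadd_comm)
    finally show ?thesis using span2_swap by metis
  next
    case True
    then have "\<alpha> \<noteq> 0" using ab by (cases u rule: prod_cases4; cases w rule: prod_cases4) auto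
    have "L = span2 w u" using L(1) span2_swap by metis
    also have "\<dots> = span2 (smul 1 w) (vadd (smul \<alpha> u) (smul \<beta> w))" using \<open>\<alpha> \<noteq> 0\<close> by (simp add: span2_gen)
    also have "\<dots> = span2 w (0,0,0,1)" using ab by (simp add: smul_one)
    finally show ?thesis using span2_swap by metis
  qed
qed

lemma UnGamma_P0:
  assumes "L \<in> UnGamma_lines" "(0,0,0,1) \<in> L"
  shows "\<exists>v1 v2. v2 \<noteq> v1^2 \<and> L = span2 (0,0,0,1::'a::field) (1,v1,v2,0)"
proof -
  have L: "L \<in> lines" "card {P \<in> cubic_points. P \<subseteq> L} = 1" "\<forall>\<pi>\<in>osc_planes. \<not> L \<subseteq> \<pi>"
    using assms(1) unfolding UnGamma_lines_def by blast+
  obtain w where w: "L = span2 (0,0,0,1::'a) w" using lineP0_form[OF L(1) assms(2)] by blast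
  obtain w0 w1 w2 w3 where w': "w = (w0,w1,w2,w3)" by (cases w rule: prod_cases4)
  have "span2 (0,0,0,1::'a) w = span2 (smul 1 (0,0,0,1)) (vadd (smul 1 (w0,w1,w2,0)) (smul w3 (0,0,0,1)))"
    using w' by simp
  also have "\<dots> = span2 (0,0,0,1) (w0,w1,w2,0)" by (rule span2_gen) simp_all
  finally have L2: "L = span2 (0,0,0,1) (w0,w1,w2,0)" using w by simp
  have "w0 \<noteq> 0"
  proof
    assume "w0 = 0"
    have "plane (1, -3*0, 3*0^2, -(0^3)) \<in> (osc_planes :: 'a vec4 set set)" unfolding osc_planes_def by blast
    moreover have "L \<subseteq> plane (1, -3*0, 3*0^2, -(0^3))"
    proof
      fix x assume "x \<in> L"
      then have "x \<in> span2 (0,0,0,1) (w0,w1,w2,0)" using L2 by simp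
      then obtain a b where "x = vadd (smul a (0,0,0,1)) (smul b (w0,w1,w2,0))" unfolding in_span2 by blast
      then show "x \<in> plane (1, -3*0, 3*0^2, -(0^3))" using \<open>w0 = 0\<close> unfolding plane_def by simp
    qed
    ultimately show False using L(3) by blast
  qed
  define v1 where "v1 = w1/w0"
  define v2 where "v2 = w2/w0"
  have "(w0,w1,w2,0) = vadd (smul w0 (1,v1,v2,0)) (smul 0 (0,0,0,1))" using \<open>w0 \<noteq> 0\<close> unfolding v1_def v2_def by simp
  then have "L = span2 (smul 1 (0,0,0,1)) (vadd (smul w0 (1,v1,v2,0)) (smul 0 (0,0,0,1)))" using L2 by (simp add: smul_one)
  also have "\<dots> = span2 (0,0,0,1) (1,v1,v2,0)" using \<open>w0 \<noteq> 0\<close> by (intro span2_gen) simp_all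
  finally have L3: "L = span2 (0,0,0,1) (1,v1,v2,0)" .
  have "v2 \<noteq> v1^2"
  proof
    assume h: "v2 = v1^2"
    have sub: "L \<in> subspaces" using L(1) by (rule lines_sub)
    have A: "pt (cub2 1 v1) \<in> {P \<in> cubic_points. P \<subseteq> L}"
    proof -
      have "pt (cub2 1 v1) \<in> cubic_points" unfolding cubic_homog by (rule cub_mem) simp
      moreover have "cub2 1 v1 \<in> L" unfolding L3 cub2_in_lineP0 using h
        by (simp add: power2_eq_square)
      then have "pt (cub2 1 v1) \<subseteq> L" using pt_sub_iff[OF sub] by blast
      ultimately show ?thesis by blast
    qed
    have B: "pt (0,0,0,1) \<in> {P \<in> cubic_points. P \<subseteq> L}"
      using pt_P0_cubic pt_sub_iff[OF sub] assms(2) by blast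
    have "pt (cub2 1 v1) \<noteq> pt (0,0,0,1)"
    proof
      assume "pt (cub2 1 v1) = pt (0,0,0,1)"
      then have "cub2 1 v1 \<in> pt (0,0,0,1)" using pt_self by metis
      then obtain c where "cub2 1 v1 = smul c (0,0,0,1)" unfolding in_pt by blast
      then show False by (simp add: cub2_def)
    qed
    moreover obtain X where X: "{P \<in> cubic_points. P \<subseteq> L} = {X}" using L(2) by (rule card_1_singletonE)
    ultimately show False using A B unfolding X by simp
  qed
  then show ?thesis using L3 by blast
qed


lemma lmt_P0: "lmt (a,b,c,d) (0,0,0,1) = (b^3, b^2*d, b*d^2, d^3)"
  by (simp add: lmt_expl)

lemma lmt_v: "lmt (a,b,c,d) (1,0,r,0) = (a^3 + r*(3*a*b^2), a^2*c + r*(b^2*c + 2*a*b*d),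
     a*c^2 + r*(a*d^2+2*b*c*d), c^3 + r*(3*c*d^2))"
  by (simp add: lmt_expl algebra_simps)

lemma stab_gen: assumes "a*d-b*c \<noteq> 0" "r' \<noteq> 0"
  "lmt (a,b,c,d) ` span2 (0,0,0,1) (1,0,r,0) \<subseteq> span2 (0,0,0,1) (1,0,r',0::'a::field)"
  shows "b = 0 \<and> c = 0 \<and> r*d^2 = r'*a^2"
proof -
  have "(0,0,0,1) \<in> span2 (0,0,0,1) (1,0,r,0::'a)" "(1,0,r,0) \<in> span2 (0,0,0,1) (1,0,r,0::'a)"
    unfolding in_lineP0 by simp_all
  then have "lmt (a,b,c,d) (0,0,0,1) \<in> span2 (0,0,0,1) (1,0,r',0)"
     "lmt (a,b,c,d) (1,0,r,0) \<in> span2 (0,0,0,1) (1,0,r',0)" using assms(3) by blast+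
  then have h1: "(b^3, b^2*d, b*d^2, d^3) \<in> span2 (0,0,0,1) (1,0,r',0)"
    and h2: "(a^3 + r*(3*a*b^2), a^2*c + r*(b^2*c + 2*a*b*d), a*c^2 + r*(a*d^2+2*b*c*d), c^3 + r*(3*c*d^2)) \<in> span2 (0,0,0,1) (1,0,r',0)"
    by (simp_all only: lmt_P0 lmt_v)
  from h1 have e1: "b^2*d = 0" "b*d^2 = b^3*r'" unfolding in_lineP0 by simp_all
  have "b = 0"
  proof (rule ccontr)
    assume "b \<noteq> 0"
    then have "d = 0" using e1(1) by simp
    then show False using e1(2) \<open>b \<noteq> 0\<close> assms(2) by simp
  qed
  then have "a \<noteq> 0" "d \<noteq> 0" using assms(1) by auto
  from h2 \<open>b = 0\<close> have e2: "a^2*c = 0" "a*c^2 + r*(a*d^2) = a^3*r'" unfolding in_lineP0 by simp_all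
  then have "c = 0" using \<open>a \<noteq> 0\<close> by simp
  then have "a * (r*d^2) = a * (r'*a^2)" using e2(2) by (simp add: algebra_simps power2_eq_square power3_eq_cube)
  then have "r*d^2 = r'*a^2" using \<open>a \<noteq> 0\<close> by simp
  then show ?thesis using \<open>b = 0\<close> \<open>c = 0\<close> by simp
qed

lemma stab_fix: assumes "e^2 = 1" "k \<noteq> 0"
  shows "lmt (k,0,0,e*k) ` span2 (0,0,0,1) (1,0,r,0) = span2 (0,0,0,1) (1,0,r,0::'a::field)"
proof -
  have "e \<noteq> 0" using assms(1) by auto
  have "lmt (k,0,0,e*k) (0,0,0,1) = smul ((e*k)^3) (0,0,0,1)" by (simp add: lmt_P0)
  moreover have "lmt (k,0,0,e*k) (1,0,r,0) = vadd (smul (k^3) (1,0,r,0)) (smul 0 (0,0,0,1))"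
    using assms(1) by (simp add: lmt_v algebra_simps power2_eq_square power3_eq_cube)
  ultimately have "lmt (k,0,0,e*k) ` span2 (0,0,0,1) (1,0,r,0) =
     span2 (smul ((e*k)^3) (0,0,0,1)) (vadd (smul (k^3) (1,0,r,0)) (smul 0 (0,0,0,1)))"
    by (simp only: lmt_image_span2)
  also have "\<dots> = span2 (0,0,0,1) (1,0,r,0)" using assms(2) \<open>e \<noteq> 0\<close> by (intro span2_gen) simp_all
  finally show ?thesis .
qed

lemma reach: assumes "e \<noteq> 0"
  shows "lmt (1,0,v1,e) ` span2 (0,0,0,1) (1,0,r,0) = span2 (0,0,0,1) (1,v1,v1^2 + r*e^2,0::'a::field)"
proof -
  have "lmt (1,0,v1,e) (0,0,0,1) = smul (e^3) (0,0,0,1)" by (simp add: lmt_P0)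
  moreover have "lmt (1,0,v1,e) (1,0,r,0) = vadd (smul 1 (1,v1,v1^2 + r*e^2,0)) (smul (v1^3 + r*(3*v1*e^2)) (0,0,0,1))"
    by (simp add: lmt_v algebra_simps)
  ultimately have "lmt (1,0,v1,e) ` span2 (0,0,0,1) (1,0,r,0) =
     span2 (smul (e^3) (0,0,0,1)) (vadd (smul 1 (1,v1,v1^2 + r*e^2,0)) (smul (v1^3 + r*(3*v1*e^2)) (0,0,0,1)))"
    by (simp only: lmt_image_span2)
  also have "\<dots> = span2 (0,0,0,1) (1,v1,v1^2 + r*e^2,0)" using assms by (intro span2_gen) simp_all
  finally show ?thesis .
qed


lemma fiber_count:
  assumes "finite A" "\<And>x. x \<in> A \<Longrightarrow> card {y\<in>A. f y = f x} = k"
  shows "card A = k * card (f ` A)"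
proof -
  let ?C = "(\<lambda>z. {y\<in>A. f y = z}) ` (f ` A)"
  have U: "\<Union>?C = A" by blast
  have inj: "inj_on (\<lambda>z. {y\<in>A. f y = z}) (f ` A)"
  proof (rule inj_onI)
    fix z1 z2 assume "z1 \<in> f ` A" "z2 \<in> f ` A" "{y\<in>A. f y = z1} = {y\<in>A. f y = z2}"
    then obtain x where "x \<in> A" "f x = z1" by blast
    then have "x \<in> {y\<in>A. f y = z2}" using \<open>{y\<in>A. f y = z1} = {y\<in>A. f y = z2}\<close> by blast
    then show "z1 = z2" using \<open>f x = z1\<close> by simp
  qed
  have "k * card ?C = card (\<Union>?C)"
  proof (rule card_partition)
    show "finite ?C" using assms(1) by simp
    show "finite (\<Union>?C)" using U assms(1) by simp
    show "\<And>c. c \<in> ?C \<Longrightarrow> card c = k" using assms(2) by blast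
    fix c1 c2 assume "c1 \<in> ?C" "c2 \<in> ?C" "c1 \<noteq> c2"
    then obtain z1 z2 where "c1 = {y\<in>A. f y = z1}" "c2 = {y\<in>A. f y = z2}" by blast
    then show "c1 \<inter> c2 = {}" using \<open>c1 \<noteq> c2\<close> by auto
  qed
  then show ?thesis using U card_image[OF inj] by simp
qed

lemma two_nz:
  assumes "odd CARD('a::{field,finite})"
  shows "(2::'a) \<noteq> 0"
proof
  assume h2: "(2::'a) = 0"
  let ?h = "\<lambda>x::'a. x*x + x"
  have "\<And>x. card {y\<in>UNIV. ?h y = ?h x} = 2"
  proof -
    fix x :: 'a
    have "{y\<in>UNIV. ?h y = ?h x} = {x, x+1}"
    proof (intro equalityI subsetI)
      fix y assume "y \<in> {y\<in>UNIV. ?h y = ?h x}"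
      then have "y*y + y = x*x + x" by simp
      then have "(y - x) * (y + x + 1) = 0" by (simp add: algebra_simps)
      then have "y - x = 0 \<or> y + x + 1 = 0" by simp
      moreover have "y = - x - 1" if h: "y + x + 1 = 0"
      proof -
        have "y = (y + x + 1) - x - 1" by simp
        also have "\<dots> = 0 - x - 1" using h by simp
        finally show ?thesis by simp
      qed
      ultimately have "y = x \<or> y = - x - 1" by auto
      moreover have "- x - 1 = x + 1"
      proof -
        have "x + 1 - (- x - 1) = 2 * (x + 1)" by (simp add: algebra_simps)
        then show ?thesis using h2 by simp
      qed
      ultimately show "y \<in> {x, x+1}" by auto
    next
      fix y assume "y \<in> {x, x+1}"
      moreover have "(x+1)*(x+1) + (x+1) = x*x + x + 2*(x+1)" by (simp add: algebra_simps)
      ultimately show "y \<in> {y\<in>UNIV. ?h y = ?h x}" using h2 by auto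
    qed
    then show "card {y\<in>UNIV. ?h y = ?h x} = 2" by simp
  qed
  then have "card (UNIV::'a set) = 2 * card (?h ` UNIV)" by (intro fiber_count) simp_all
  then show False using assms by simp
qed


lemma sq_eq_iff: "(y::'a::field)^2 = x^2 \<longleftrightarrow> y = x \<or> y = -x"
proof -
  have "y^2 - x^2 = (y - x) * (y + x)" by (simp add: algebra_simps power2_eq_square)
  then have "y^2 = x^2 \<longleftrightarrow> (y - x) * (y + x) = 0" by (metis eq_iff_diff_eq_0)
  also have "\<dots> \<longleftrightarrow> y = x \<or> y = -x" by (simp add: eq_neg_iff_add_eq_0)
  finally show ?thesis .
qed

lemma card_nonzero: "card (UNIV - {0::'a::{field,finite}}) = CARD('a) - 1"
  by (simp add: card_Diff_subset)

lemma nonsq_ratio: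
  assumes odd: "odd CARD('a::{field,finite})" and r: "\<not>(\<exists>x. x^2 = \<rho>)" and "\<delta> \<noteq> 0" "\<not>(\<exists>x. x^2 = (\<delta>::'a))"
  shows "\<exists>e. e \<noteq> 0 \<and> \<delta> = \<rho> * e^2"
proof -
  have two: "(2::'a) \<noteq> 0" using two_nz[OF odd] .
  have "\<rho> \<noteq> 0" using r by (metis power2_eq_square mult_zero_left)
  let ?N = "UNIV - {0::'a}"
  let ?S = "(\<lambda>x. x^2) ` ?N"
  let ?T = "(\<lambda>s. \<rho>*s) ` ?S"
  have "card ?N = 2 * card ?S"
  proof (rule fiber_count)
    fix x assume x: "x \<in> ?N"
    have "{y\<in>?N. y^2 = x^2} = {x, -x}" using x by (auto simp: sq_eq_iff)
    moreover have "x \<noteq> -x"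
    proof
      assume "x = -x" then have "2*x = 0" by (simp add: algebra_simps mult_2)
      then show False using x two by simp
    qed
    ultimately show "card {y\<in>?N. y^2 = x^2} = 2" by simp
  qed simp
  moreover have "card ?T = card ?S"
    by (rule card_image) (use \<open>\<rho> \<noteq> 0\<close> in \<open>auto simp: inj_on_def\<close>)
  moreover have "?S \<inter> ?T = {}"
  proof (rule ccontr)
    assume "?S \<inter> ?T \<noteq> {}"
    then obtain x y where xy: "x \<noteq> 0" "y \<noteq> 0" "x^2 = \<rho> * y^2" by auto
    then have "(x/y)^2 = \<rho>" by (simp add: power_divide)
    then show False using r by blast
  qed
  moreover have "?S \<union> ?T \<subseteq> ?N" using \<open>\<rho> \<noteq> 0\<close> by auto
  ultimately have "?S \<union> ?T = ?N"
    by (intro card_subset_eq) (simp_all add: card_Un_disjoint)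
  moreover have "\<delta> \<in> ?N" using \<open>\<delta> \<noteq> 0\<close> by simp
  moreover have "\<delta> \<notin> ?S" using assms(4) by blast
  ultimately have "\<delta> \<in> ?T" by blast
  then show ?thesis by auto
qed

lemma card_nz_pairs: "card {p::'a::{field,finite} \<times> 'a. p \<noteq> (0,0)} = CARD('a)^2 - 1"
proof -
  have "{p::'a \<times> 'a. p \<noteq> (0,0)} = UNIV - {(0,0)}" by auto
  then show ?thesis by (simp add: card_Diff_subset power2_eq_square)
qed

lemma card_det_nz:
  assumes "(a,b) \<noteq> (0::'a::{field,finite}, 0)"
  shows "card {(c,d). a*d - b*c \<noteq> (0::'a)} = CARD('a)^2 - CARD('a)"
proof -
  let ?K = "{(c,d). a*d - b*c = (0::'a)}"
  have K: "?K = (\<lambda>k. (k*a, k*b)) ` UNIV"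
  proof (intro equalityI subsetI)
    fix p assume "p \<in> ?K"
    then obtain c d where p: "p = (c,d)" "a*d = b*c" by auto
    show "p \<in> (\<lambda>k. (k*a, k*b)) ` UNIV"
    proof (cases "a = 0")
      case True
      then have "b \<noteq> 0" using assms by simp
      then have "c = 0" using p True by simp
      then have "p = ((d/b)*a, (d/b)*b)" using p True \<open>b \<noteq> 0\<close> by simp
      then show ?thesis by blast
    next
      case False
      have "d = (c/a)*b" using p False by (simp add: field_simps)
      then have "p = ((c/a)*a, (c/a)*b)" using p False by simp
      then show ?thesis by blast
    qed
  qed auto
  have "inj (\<lambda>k. (k*a, k*b))" using assms by (auto simp: inj_def)
  then have cK: "card ?K = CARD('a)" unfolding K by (simp add: card_image)
  have "{(c,d). a*d - b*c \<noteq> (0::'a)} = UNIV - ?K" by auto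
  then show ?thesis using cK by (simp add: card_Diff_subset power2_eq_square)
qed

lemma card_GL:
  "card {A::('a::{field,finite} \<times> 'a \<times> 'a \<times> 'a). det2 A \<noteq> 0} = (CARD('a)^2 - CARD('a)) * (CARD('a)^2 - 1)"
proof -
  let ?T = "{A::('a \<times> 'a \<times> 'a \<times> 'a). det2 A \<noteq> 0}"
  let ?f = "\<lambda>A::('a \<times> 'a \<times> 'a \<times> 'a). (fst A, fst (snd A))"
  have "card ?T = (CARD('a)^2 - CARD('a)) * card (?f ` ?T)"
  proof (rule fiber_count)
    fix A assume "A \<in> ?T"
    obtain a b c d where A: "A = (a,b,c,d)" by (cases A rule: prod_cases4)
    have "(a,b) \<noteq> (0,0)" using \<open>A \<in> ?T\<close> A by auto
    have "{B\<in>?T. ?f B = ?f A} = (\<lambda>(c,d). (a,b,c,d)) ` {(c,d). a*d - b*c \<noteq> 0}"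
    proof (intro equalityI subsetI)
      fix B assume "B \<in> {B\<in>?T. ?f B = ?f A}"
      then obtain c' d' where "B = (a,b,c',d')" "a*d' - b*c' \<noteq> 0" using A by (cases B rule: prod_cases4) auto
      then show "B \<in> (\<lambda>(c,d). (a,b,c,d)) ` {(c,d). a*d - b*c \<noteq> 0}" by force
    qed (auto simp: A)
    moreover have "card ((\<lambda>(c,d). (a,b,c,d)) ` {(c,d). a*d - b*c \<noteq> 0}) = card {(c::'a,d::'a). a*d - b*c \<noteq> 0}"
      by (rule card_image) (auto simp: inj_on_def)
    ultimately show "card {B\<in>?T. ?f B = ?f A} = CARD('a)^2 - CARD('a)"
      using card_det_nz[OF \<open>(a,b) \<noteq> (0,0)\<close>] by simp
  qed simp
  moreover have "?f ` ?T = {p. p \<noteq> (0,0)}"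
  proof (intro equalityI subsetI)
    fix p assume "p \<in> ?f ` ?T"
    then obtain A where "A \<in> ?T" "p = ?f A" by blast
    then show "p \<in> {p. p \<noteq> (0,0)}" by (cases A rule: prod_cases4) auto
  next
    fix p :: "'a \<times> 'a" assume "p \<in> {p. p \<noteq> (0,0)}"
    then obtain a b where p: "p = (a,b)" "(a,b) \<noteq> (0,0)" by (cases p) auto
    show "p \<in> ?f ` ?T"
    proof (cases "a = 0")
      case True
      then have "(a,b,1,0) \<in> ?T" using p by simp
      moreover have "p = ?f (a,b,1,0)" using p by simp
      ultimately show ?thesis by (rule rev_image_eqI)
    next
      case False
      then have "(a,b,0,1) \<in> ?T" by simp
      moreover have "p = ?f (a,b,0,1)" using p by simp
      ultimately show ?thesis by (rule rev_image_eqI)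
    qed
  qed
  ultimately show ?thesis using card_nz_pairs[where 'a='a] by simp
qed


definition Sset :: "('a::field \<times> 'a \<times> 'a \<times> 'a) set" where
  "Sset = {(k,0,0,e*k) | k e. k \<noteq> 0 \<and> e^2 = 1}"

lemma Sset_mem: "k \<noteq> 0 \<Longrightarrow> e^2 = 1 \<Longrightarrow> (k,0,0,e*k) \<in> Sset"
  unfolding Sset_def by blast

lemma sq_one: "(e::'a::field)^2 = 1 \<longleftrightarrow> e = 1 \<or> e = -1"
  using sq_eq_iff[of e 1] by simp

lemma stab_iff:
  assumes "r \<noteq> 0"
  shows "(det2 A \<noteq> 0 \<and> lmt A ` span2 (0,0,0,1) (1,0,r,0) = span2 (0,0,0,1) (1,0,r,0::'a::field)) \<longleftrightarrow> A \<in> Sset"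
proof
  assume h: "det2 A \<noteq> 0 \<and> lmt A ` span2 (0,0,0,1) (1,0,r,0) = span2 (0,0,0,1) (1,0,r,0::'a::field)"
  obtain a b c d where A: "A = (a,b,c,d)" by (cases A rule: prod_cases4)
  have "b = 0 \<and> c = 0 \<and> r*d^2 = r*a^2" using h A assms by (intro stab_gen) auto
  then have bc: "b = 0" "c = 0" "d^2 = a^2" using assms by auto
  then have "a \<noteq> 0" using h A by auto
  have "(d/a)^2 = 1" using bc(3) \<open>a \<noteq> 0\<close> by (simp add: power_divide)
  moreover have "A = (a,0,0,(d/a)*a)" using A bc \<open>a \<noteq> 0\<close> by simp
  ultimately show "A \<in> Sset" using Sset_mem[OF \<open>a \<noteq> 0\<close>, of "d/a"] by simp
next
  assume "A \<in> Sset"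
  then obtain k e where A: "A = (k,0,0,e*k)" "k \<noteq> 0" "e^2 = 1" unfolding Sset_def by blast
  then have "e \<noteq> 0" by auto
  then show "det2 A \<noteq> 0 \<and> lmt A ` span2 (0,0,0,1) (1,0,r,0) = span2 (0,0,0,1) (1,0,r,0::'a::field)"
    using A stab_fix[OF A(3) A(2)] by simp
qed

lemma nd: fixes k k' :: "'a::field" assumes "(2::'a) \<noteq> 0" "k \<noteq> 0"
  shows "(k,0::'a,0::'a,k) \<noteq> (k',0,0,-k')"
proof
  assume e: "(k,0::'a,0::'a,k) = (k',0,0,-k')"
  have e1: "k = k'" using arg_cong[OF e, of fst] by (simp only: fst_conv)
  have e2: "k = -k'" using arg_cong[OF e, of "\<lambda>p. snd (snd (snd p))"] by (simp only: snd_conv)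
  have "k + k = k' + - k'" using e1 e2 by (rule arg_cong2)
  then have "k + k = 0" by (simp only: add.right_inverse)
  then have "2*k = 0" by (simp only: mult_2)
  then show False using assms by simp
qed

lemma card_Sset:
  assumes "odd CARD('a::{field,finite})"
  shows "card (Sset :: ('a \<times> 'a \<times> 'a \<times> 'a) set) = 2 * (CARD('a) - 1)"
proof -
  let ?N = "UNIV - {0::'a}"
  let ?A = "(\<lambda>k. (k,0::'a,0::'a,k)) ` ?N"
  let ?B = "(\<lambda>k. (k,0::'a,0::'a,-k)) ` ?N"
  have two: "(2::'a) \<noteq> 0" using two_nz[OF assms] .
  have S: "(Sset :: ('a \<times> 'a \<times> 'a \<times> 'a) set) = ?A \<union> ?B"
  proof (intro equalityI subsetI)
    fix x assume "x \<in> (Sset :: ('a \<times> 'a \<times> 'a \<times> 'a) set)"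
    then obtain k e where x: "x = (k,0,0,e*k)" "k \<noteq> 0" "e^2 = 1" unfolding Sset_def by blast
    have kN: "k \<in> ?N" using x(2) by simp
    have "e = 1 \<or> e = -1" using x(3) sq_one by blast
    then show "x \<in> ?A \<union> ?B"
    proof
      assume "e = 1"
      then have "x = (\<lambda>k. (k,0::'a,0::'a,k)) k" using x(1) by simp
      then have "x \<in> ?A" using kN by (rule image_eqI)
      then show ?thesis by (rule UnI1)
    next
      assume "e = -1"
      then have "x = (\<lambda>k. (k,0::'a,0::'a,-k)) k" using x(1) by simp
      then have "x \<in> ?B" using kN by (rule image_eqI)
      then show ?thesis by (rule UnI2)
    qed
  next
    fix x :: "'a \<times> 'a \<times> 'a \<times> 'a" assume "x \<in> ?A \<union> ?B"
    then show "x \<in> Sset"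
    proof
      assume "x \<in> ?A"
      then obtain k where k: "k \<in> ?N" "x = (k,0,0,k)" by blast
      have "k \<noteq> 0" using k(1) by simp
      have "(1::'a)^2 = 1" by simp
      have "(k,0,0,1*k) \<in> Sset" by (rule Sset_mem[OF \<open>k \<noteq> 0\<close> \<open>(1::'a)^2 = 1\<close>])
      then show "x \<in> Sset" using k(2) by simp
    next
      assume "x \<in> ?B"
      then obtain k where k: "k \<in> ?N" "x = (k,0,0,-k)" by blast
      have "k \<noteq> 0" using k(1) by simp
      have "(-1::'a)^2 = 1" by simp
      have "(k,0,0,(-1)*k) \<in> Sset" by (rule Sset_mem[OF \<open>k \<noteq> 0\<close> \<open>(-1::'a)^2 = 1\<close>])
      then show "x \<in> Sset" using k(2) by simp
    qed
  qed
  have d: "?A \<inter> ?B = {}"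
  proof (rule ccontr)
    assume "?A \<inter> ?B \<noteq> {}"
    then obtain x :: "'a \<times> 'a \<times> 'a \<times> 'a" where x1: "x \<in> ?A" and x2: "x \<in> ?B" by blast
    from x1 obtain k where k: "k \<in> ?N" "x = (k,0,0,k)" by blast
    from x2 obtain k' where k': "k' \<in> ?N" "x = (k',0,0,-k')" by blast
    have e: "(k,0::'a,0::'a,k) = (k',0,0,-k')" using k(2)[symmetric] k'(2) by (rule trans)
    have "k \<noteq> 0" using k(1) by simp
    show False using nd[OF two \<open>k \<noteq> 0\<close>, of k'] e by contradiction
  qed
  have c1: "card ?A = CARD('a) - 1"
    by (subst card_image) (auto simp: inj_on_def card_nonzero)
  have c2: "card ?B = CARD('a) - 1"
    by (subst card_image) (auto simp: inj_on_def card_nonzero)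
  have "card (?A \<union> ?B) = card ?A + card ?B"
    by (rule card_Un_disjoint) (simp, simp, rule d)
  then show ?thesis unfolding S using c1 c2 by simp
qed

lemma mm_scal_left: "mm (k,0,0,k) (a,b,c,d) = (k*a, k*b, k*c, k*d)"
  by simp

lemma mm_scal_comm: "mm (k,0,0,k) A = mm A (k,0,0,k)"
  by (cases A rule: prod_cases4) (simp add: algebra_simps)

lemma mm_one: "mm (1,0,0,1) A = A"
  by (cases A rule: prod_cases4) simp

lemma lmt_mm_image: "lmt (mm A B) ` S = lmt A ` lmt B ` S"
  by (simp add: image_image lmt_comp)

lemma orbit_fiber:
  assumes "r \<noteq> 0" "det2 A0 \<noteq> 0"
  shows "{A. det2 A \<noteq> 0 \<and> lmt A ` span2 (0,0,0,1) (1,0,r,0) = lmt A0 ` span2 (0,0,0,1) (1,0,r,0::'a::field)}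
     = (\<lambda>\<sigma>. mm A0 \<sigma>) ` Sset"
proof (intro equalityI subsetI)
  let ?l = "span2 (0,0,0,1) (1,0,r,0::'a::field)"
  have sub: "?l \<in> subspaces" by (rule span2_sub)
  fix A assume "A \<in> {A. det2 A \<noteq> 0 \<and> lmt A ` ?l = lmt A0 ` ?l}"
  then have A: "det2 A \<noteq> 0" "lmt A ` ?l = lmt A0 ` ?l" by blast+
  define \<sigma>' where "\<sigma>' = mm (adj A0) A"
  have "lmt \<sigma>' ` ?l = lmt (adj A0) ` lmt A0 ` ?l" unfolding \<sigma>'_def lmt_mm_image A(2) ..
  also have "\<dots> = ?l" by (rule lmt_adj_image[OF sub assms(2)])
  finally have "det2 \<sigma>' \<noteq> 0 \<and> lmt \<sigma>' ` ?l = ?l" using A(1) assms(2) by (simp add: \<sigma>'_def det2_mm det2_adj)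
  then have "\<sigma>' \<in> Sset" using stab_iff[OF assms(1)] by blast
  then obtain k e where ke: "\<sigma>' = (k,0,0,e*k)" "k \<noteq> 0" "e^2 = 1" unfolding Sset_def by blast
  define i where "i = inverse (det2 A0)"
  define \<sigma> where "\<sigma> = mm (i,0,0,i) \<sigma>'"
  have "i \<noteq> 0" using assms(2) by (simp add: i_def)
  have "\<sigma> = (i*k, 0, 0, e*(i*k))" using ke by (simp add: \<sigma>_def algebra_simps)
  moreover have "i*k \<noteq> 0" using ke \<open>i \<noteq> 0\<close> by simp
  ultimately have "\<sigma> \<in> Sset" using Sset_mem[of "i*k" e] ke(3) by simp
  have "mm A0 \<sigma> = mm (mm A0 (i,0,0,i)) \<sigma>'" by (simp add: \<sigma>_def mm_assoc)
  also have "\<dots> = mm (i,0,0,i) (mm A0 \<sigma>')" by (simp add: mm_scal_comm[symmetric] mm_assoc)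
  also have "mm A0 \<sigma>' = mm (det2 A0,0,0,det2 A0) A" by (simp add: \<sigma>'_def mm_assoc[symmetric] mm_adj)
  also have "mm (i,0,0,i) (mm (det2 A0,0,0,det2 A0) A) = mm (mm (i,0,0,i) (det2 A0,0,0,det2 A0)) A"
    by (rule mm_assoc[symmetric])
  also have "mm (i,0,0,i) (det2 A0,0,0,det2 A0) = (1,0,0,1)" using assms(2) by (simp add: i_def)
  finally have "A = mm A0 \<sigma>" by (simp add: mm_one)
  then show "A \<in> (\<lambda>\<sigma>. mm A0 \<sigma>) ` Sset" using \<open>\<sigma> \<in> Sset\<close> by blast
next
  let ?l = "span2 (0,0,0,1) (1,0,r,0::'a::field)"
  fix A assume "A \<in> (\<lambda>\<sigma>. mm A0 \<sigma>) ` Sset"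
  then obtain \<sigma> where s: "\<sigma> \<in> Sset" "A = mm A0 \<sigma>" by blast
  then have "det2 \<sigma> \<noteq> 0 \<and> lmt \<sigma> ` ?l = ?l" using stab_iff[OF assms(1)] by blast
  then have "det2 A \<noteq> 0 \<and> lmt A ` ?l = lmt A0 ` ?l" using s(2) assms(2) by (simp add: det2_mm lmt_mm_image)
  then show "A \<in> {A. det2 A \<noteq> 0 \<and> lmt A ` ?l = lmt A0 ` ?l}" by blast
qed

lemma mm_inj: assumes "det2 A0 \<noteq> 0" shows "inj (mm A0)"
proof (rule injI)
  fix X Y assume "mm A0 X = mm A0 Y"
  then have "mm (adj A0) (mm A0 X) = mm (adj A0) (mm A0 Y)" by simp
  then have "mm (det2 A0,0,0,det2 A0) X = mm (det2 A0,0,0,det2 A0) Y" by (simp add: mm_assoc[symmetric] mm_adj2)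
  then show "X = Y" using assms
    by (cases X rule: prod_cases4; cases Y rule: prod_cases4) simp
qed

lemma orbit_card:
  assumes "odd CARD('a::{field,finite})" "r \<noteq> (0::'a)"
  shows "card {A::('a \<times> 'a \<times> 'a \<times> 'a). det2 A \<noteq> 0} =
    2 * (CARD('a) - 1) * card ((\<lambda>A. lmt A ` span2 (0,0,0,1) (1,0,r,0)) ` {A. det2 A \<noteq> 0})"
proof (rule fiber_count)
  fix A0 :: "'a \<times> 'a \<times> 'a \<times> 'a" assume "A0 \<in> {A. det2 A \<noteq> 0}"
  then have d: "det2 A0 \<noteq> 0" by simp
  have "{A \<in> {A. det2 A \<noteq> 0}. lmt A ` span2 (0,0,0,1) (1,0,r,0) = lmt A0 ` span2 (0,0,0,1) (1,0,r,0)}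
     = (\<lambda>\<sigma>. mm A0 \<sigma>) ` Sset" using orbit_fiber[OF assms(2) d] by simp
  moreover have "card ((\<lambda>\<sigma>. mm A0 \<sigma>) ` Sset) = card (Sset :: ('a \<times> 'a \<times> 'a \<times> 'a) set)"
    using mm_inj[OF d] by (simp add: card_image inj_on_subset)
  ultimately show "card {A \<in> {A. det2 A \<noteq> 0}. lmt A ` span2 (0,0,0,1) (1,0,r,0) = lmt A0 ` span2 (0,0,0,1) (1,0,r,0)}
     = 2 * (CARD('a) - 1)" using card_Sset[OF assms(1)] by (simp only:)
qed (rule finite_subset[OF subset_UNIV], simp)


lemma Gq_mem: "a*d-b*c \<noteq> 0 \<Longrightarrow> gmap a b c d \<in> Gq"
  unfolding Gq_def by blast

lemma Gorbit_eq: "Gorbit (span2 u v) = (\<lambda>A. lmt A ` span2 u v) ` {A. det2 A \<noteq> 0}"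
proof (intro equalityI subsetI)
  fix L assume "L \<in> Gorbit (span2 u v)"
  then obtain \<phi> where "\<phi> \<in> Gq" "L = \<phi> (span2 u v)" unfolding Gorbit_def by blast
  then obtain a b c d where "a*d-b*c \<noteq> 0" "L = gmap a b c d (span2 u v)" unfolding Gq_def by blast
  then have "L = lmt (a,b,c,d) ` span2 u v" "(a,b,c,d) \<in> {A. det2 A \<noteq> 0}" by (simp_all add: gmap_eq span2_sub)
  then show "L \<in> (\<lambda>A. lmt A ` span2 u v) ` {A. det2 A \<noteq> 0}" by blast
next
  fix L assume "L \<in> (\<lambda>A. lmt A ` span2 u v) ` {A. det2 A \<noteq> 0}"
  then obtain A where A: "det2 A \<noteq> 0" "L = lmt A ` span2 u v" by blast
  obtain a b c d where Ad: "A = (a,b,c,d)" by (cases A rule: prod_cases4)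
  have "gmap a b c d \<in> Gq" using A Ad by (intro Gq_mem) simp
  moreover have "L = gmap a b c d (span2 u v)" using A Ad by (simp add: gmap_eq span2_sub)
  ultimately show "L \<in> Gorbit (span2 u v)" unfolding Gorbit_def by blast
qed

lemma gmap_scale: assumes "k \<noteq> 0" shows "gmap k 0 0 (e*k) = gmap 1 0 0 (e::'a::field)"
proof
  fix S :: "'a vec4 set"
  show "gmap k 0 0 (e*k) S = gmap 1 0 0 e S"
  proof (cases "S \<in> subspaces")
    case True
    have m: "mm (1,0,0,e) (k,0,0,k) = (k,0,0,e*k)" by simp
    have "gmap k 0 0 (e*k) S = lmt (mm (1,0,0,e) (k,0,0,k)) ` S" using True by (simp add: gmap_eq m)
    also have "\<dots> = lmt (1,0,0,e) ` lmt (k,0,0,k) ` S" by (rule lmt_mm_image)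
    also have "\<dots> = lmt (1,0,0,e) ` S" using lmt_scale_image[OF True assms] by simp
    also have "\<dots> = gmap 1 0 0 e S" using True by (simp add: gmap_eq)
    finally show ?thesis .
  next
    case False
    then show ?thesis by (simp add: gmap_def)
  qed
qed

lemma Gstab_eq:
  assumes "r \<noteq> 0"
  shows "Gstab (span2 (0,0,0,1) (1,0,r,0::'a::field)) = {gmap 1 0 0 1, gmap 1 0 0 (-1)}"
proof (intro equalityI subsetI)
  let ?l = "span2 (0,0,0,1) (1,0,r,0::'a::field)"
  fix \<phi> assume "\<phi> \<in> Gstab ?l"
  then have "\<phi> \<in> Gq" "\<phi> ?l = ?l" unfolding Gstab_def by blast+
  then obtain a b c d where abcd: "a*d-b*c \<noteq> 0" "\<phi> = gmap a b c d" unfolding Gq_def by blast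
  then have "lmt (a,b,c,d) ` ?l = ?l" using \<open>\<phi> ?l = ?l\<close> by (simp add: gmap_eq span2_sub)
  moreover have "det2 (a,b,c,d) \<noteq> 0" using abcd(1) by simp
  ultimately have "(a,b,c,d) \<in> Sset" using stab_iff[OF assms, of "(a,b,c,d)"] by blast
  then obtain k e where ke: "(a,b,c,d) = (k,0,0,e*k)" "k \<noteq> 0" "e^2 = 1" unfolding Sset_def by blast
  then have "\<phi> = gmap k 0 0 (e*k)" using abcd(2) by simp
  also have "\<dots> = gmap 1 0 0 e" by (rule gmap_scale[OF ke(2)])
  finally have "\<phi> = gmap 1 0 0 e" .
  moreover have "e = 1 \<or> e = -1" using ke(3) sq_one by blast
  ultimately show "\<phi> \<in> {gmap 1 0 0 1, gmap 1 0 0 (-1)}" by blast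
next
  let ?l = "span2 (0,0,0,1) (1,0,r,0::'a::field)"
  fix \<phi> assume "\<phi> \<in> {gmap 1 0 0 1, gmap 1 0 0 (-1::'a)}"
  then obtain e where e: "\<phi> = gmap 1 0 0 e" "e = 1 \<or> e = (-1::'a)" by blast
  then have "e^2 = 1" by auto
  have "\<phi> \<in> Gq" using e by (auto intro: Gq_mem)
  moreover have "\<phi> ?l = lmt (1,0,0,e*1) ` ?l" using e by (simp add: gmap_eq span2_sub)
  moreover have "lmt (1,0,0,e*1) ` ?l = ?l" by (rule stab_fix[OF \<open>e^2 = 1\<close>]) simp
  ultimately show "\<phi> \<in> Gstab ?l" unfolding Gstab_def by simp
qed

lemma gmap_distinct: assumes "(2::'a::field) \<noteq> 0" shows "gmap 1 0 0 1 \<noteq> gmap 1 0 0 (-1::'a)"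
proof
  assume h: "gmap 1 0 0 1 = gmap 1 0 0 (-1::'a)"
  let ?S = "pt (1,1,0,0::'a)"
  have "gmap 1 0 0 1 ?S = lmt (1,0,0,1) ` ?S" by (simp add: gmap_eq pt_sub)
  also have "\<dots> = ?S" by (simp add: lmt_id)
  finally have a: "gmap 1 0 0 1 ?S = ?S" .
  have "gmap 1 0 0 (-1) ?S = pt (lmt (1,0,0,-1) (1,1,0,0))" by (simp add: gmap_eq pt_sub lmt_pt)
  also have "lmt (1,0,0,-1) (1,1,0,0::'a) = (1,-1,0,0)" by (simp add: lmt_expl)
  finally have b: "gmap 1 0 0 (-1) ?S = pt (1,-1,0,0)" .
  have "(1,1,0,0::'a) \<in> pt (1,-1,0,0)" using a b h pt_self[of "(1,1,0,0::'a)"] by metis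
  then obtain c where "(1,1,0,0::'a) = smul c (1,-1,0,0)" unfolding in_pt by blast
  then have h: "(1::'a,1::'a,0::'a,0::'a) = (c, -c, 0, 0)" by (simp only: smul.simps mult_1_right mult_zero_right mult_minus1_right)
  have e1: "1 = c" using arg_cong[OF h, of fst] by (simp only: fst_conv)
  have e2: "1 = -c" using arg_cong[OF h, of "\<lambda>p. fst (snd p)"] by (simp only: fst_conv snd_conv)
  have "(1::'a) + 1 = c + - c" using e1 e2 by (rule arg_cong2)
  then have "(1::'a) + 1 = 0" by (simp only: add.right_inverse)
  then show False using assms by (simp only: one_add_one)
qed

lemma arith_orbit: fixes q X :: nat assumes "q \<ge> 2" "(q^2 - q) * (q^2 - 1) = 2*(q-1)*X"
  shows "X = (q^3 - q) div 2"
proof -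
  obtain m where q: "q = m + 2" using assms(1) by (metis add.commute le_Suc_ex)
  have e1: "q^2 - q = q*(m+1)" unfolding q by (simp add: power2_eq_square algebra_simps)
  have e2: "q^2 - 1 = (m+1)*(q+1)" unfolding q by (simp add: power2_eq_square algebra_simps)
  have e3: "q^3 - q = q*(m+1)*(q+1)" unfolding q by (simp add: power3_eq_cube algebra_simps)
  have e4: "q - 1 = m + 1" unfolding q by simp
  have h: "q*(m+1)*((m+1)*(q+1)) = 2*(m+1)*X" using assms(2) unfolding e1 e2 e4 .
  have eq: "(m+1) * (q*(m+1)*(q+1)) = (m+1) * (2*X)" using h by (simp only: ac_simps)
  have nz: "m + 1 \<noteq> 0" by simp
  have h2: "q*(m+1)*(q+1) = 2*X" using eq by (rule mult_left_cancel[OF nz, THEN iffD1])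
  have "q^3 - q = 2*X" unfolding e3 h2 ..
  then show ?thesis by simp
qed



lemma nonsq_nz: assumes "\<not> (\<exists>x. x^2 = (\<rho>::'a::field))" shows "\<rho> \<noteq> 0"
proof
  assume "\<rho> = 0"
  then have "(0::'a)^2 = \<rho>" by simp
  then show False using assms by blast
qed

lemma UnGamma_sub:
  assumes odd: "odd CARD('a::{field,finite})" and r: "\<not>(\<exists>x. x^2 = \<rho>)" and L: "L \<in> (UnGamma_lines :: 'a vec4 set set)"
  shows "L \<in> (\<lambda>A. lmt A ` span2 (0,0,0,1) (1,0,1,0)) ` {A. det2 A \<noteq> 0} \<union> (\<lambda>A. lmt A ` span2 (0,0,0,1) (1,0,\<rho>,0)) ` {A. det2 A \<noteq> 0}"
proof -
  have Lp: "L \<in> lines" "card {P \<in> cubic_points. P \<subseteq> L} = 1" using L unfolding UnGamma_lines_def by blast+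
  obtain P where P1: "{P \<in> cubic_points. P \<subseteq> L} = {P}" using Lp(2) by (rule card_1_singletonE)
  then have P: "P \<in> cubic_points" "P \<subseteq> L" by blast+
  obtain x y where xy: "P = pt (cub2 x y)" "(x,y) \<noteq> (0,0)" using P(1) unfolding cubic_homog by blast
  have Lsub: "L \<in> subspaces" using Lp(1) by (rule lines_sub)
  have cxy: "cub2 x y \<in> L" using P(2) xy(1) pt_self by blast
  define a0 where "a0 = (if y \<noteq> 0 then 1 else (0::'a))"
  define c0 where "c0 = (if y \<noteq> 0 then 0 else (1::'a))"
  have dg: "a0*y - x*c0 \<noteq> 0" using xy(2) by (auto simp: a0_def c0_def)
  let ?g = "(a0, x, c0, y)"
  have dg2: "det2 ?g \<noteq> 0" using dg by simp
  have gP0: "lmt ?g (0,0,0,1) = cub2 x y"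
  proof -
    have "lmt ?g (cub2 0 1) = cub2 (a0*0 + x*1) (c0*0 + y*1)" by (rule lmt_cub2)
    then show ?thesis by (simp add: cub2_def)
  qed
  let ?L' = "lmt (adj ?g) ` L"
  have adjg: "adj ?g = (y, -x, -c0, a0)" by simp
  have dadj: "y*a0 - (-x)*(-c0) \<noteq> 0" using dg by (simp add: algebra_simps)
  have L'U: "?L' \<in> UnGamma_lines" unfolding adjg by (rule unGamma_lmt[OF dadj L])
  have L'sub: "?L' \<in> subspaces" using L'U unfolding UnGamma_lines_def by (blast intro: lines_sub)
  have "lmt (adj ?g) (cub2 x y) = smul (det2 ?g ^ 3) (0,0,0,1)" unfolding gP0[symmetric] by (rule lmt_adj1)
  then have "smul (det2 ?g ^ 3) (0,0,0,1) \<in> ?L'" using cxy by (metis image_eqI)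
  then have "smul (inverse (det2 ?g ^ 3)) (smul (det2 ?g ^ 3) (0,0,0,1)) \<in> ?L'" by (rule sub_smul[OF L'sub])
  moreover have "smul (inverse (det2 ?g ^ 3)) (smul (det2 ?g ^ 3) (0,0,0,1)) = (0,0,0,1::'a)"
    using dg2 by (simp only: smul_smul) simp
  ultimately have P0L': "(0,0,0,1) \<in> ?L'" by simp
  obtain v1 v2 where v: "v2 \<noteq> v1^2" "?L' = span2 (0,0,0,1) (1,v1,v2,0)" using UnGamma_P0[OF L'U P0L'] by blast
  have \<delta>: "v2 - v1^2 \<noteq> 0" using v(1) by simp
  obtain r e where re: "r = 1 \<or> r = \<rho>" "e \<noteq> 0" "v2 = v1^2 + r*e^2"
  proof (cases "\<exists>e. e^2 = v2 - v1^2")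
    case True
    then obtain e where e: "e^2 = v2 - v1^2" by blast
    then have "e \<noteq> 0" using \<delta> by auto
    moreover have "v2 = v1^2 + 1*e^2" using e by simp
    ultimately show ?thesis using that by blast
  next
    case False
    obtain e where e: "e \<noteq> 0" "v2 - v1^2 = \<rho> * e^2" using nonsq_ratio[OF odd r \<delta> False] by blast
    then have "v2 = v1^2 + \<rho>*e^2" by (simp add: algebra_simps)
    then show ?thesis using that e(1) by blast
  qed
  let ?B = "(1, 0, v1, e)"
  have "lmt ?B ` span2 (0,0,0,1) (1,0,r,0) = span2 (0,0,0,1) (1,v1,v1^2 + r*e^2,0)" by (rule reach[OF re(2)])
  then have B: "lmt ?B ` span2 (0,0,0,1) (1,0,r,0) = ?L'" using v(2) re(3) by simp
  have "L = lmt ?g ` ?L'" using lmt_adj_image2[OF Lsub dg2] by simp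
  also have "\<dots> = lmt ?g ` lmt ?B ` span2 (0,0,0,1) (1,0,r,0)" using B by simp
  also have "\<dots> = lmt (mm ?g ?B) ` span2 (0,0,0,1) (1,0,r,0)" by (simp only: lmt_mm_image)
  finally have Lr: "L = lmt (mm ?g ?B) ` span2 (0,0,0,1) (1,0,r,0)" .
  have "det2 ?B = e" by simp
  then have "det2 (mm ?g ?B) \<noteq> 0" using dg2 re(2) by (simp only: det2_mm) simp
  then have "L \<in> (\<lambda>A. lmt A ` span2 (0,0,0,1) (1,0,r,0)) ` {A. det2 A \<noteq> 0}" using Lr by blast
  then show ?thesis using re(1) by blast
qed

lemma orbits_disjoint:
  assumes r: "\<not>(\<exists>x. x^2 = (\<rho>::'a::field))"
  shows "(\<lambda>A. lmt A ` span2 (0,0,0,1) (1,0,1,0)) ` {A. det2 A \<noteq> 0} \<inter> (\<lambda>A. lmt A ` span2 (0,0,0,1) (1,0,\<rho>,0)) ` {A. det2 A \<noteq> 0} = {}"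
proof (rule ccontr)
  let ?l1 = "span2 (0,0,0,1) (1,0,1,0::'a)"
  let ?l2 = "span2 (0,0,0,1) (1,0,\<rho>,0::'a)"
  assume "(\<lambda>A. lmt A ` ?l1) ` {A. det2 A \<noteq> 0} \<inter> (\<lambda>A. lmt A ` ?l2) ` {A. det2 A \<noteq> 0} \<noteq> {}"
  then obtain A B where AB: "det2 A \<noteq> 0" "det2 B \<noteq> 0" "lmt A ` ?l1 = lmt B ` ?l2" by blast
  have "lmt (mm (adj B) A) ` ?l1 = lmt (adj B) ` lmt B ` ?l2" by (simp only: lmt_mm_image AB(3))
  also have "\<dots> = ?l2" by (rule lmt_adj_image[OF span2_sub AB(2)])
  finally have C: "lmt (mm (adj B) A) ` ?l1 = ?l2" .
  have dC: "det2 (mm (adj B) A) \<noteq> 0" using AB by (simp add: det2_mm det2_adj)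
  obtain a b c d where abcd: "mm (adj B) A = (a,b,c,d)" by (cases "mm (adj B) A" rule: prod_cases4)
  have da: "a*d - b*c \<noteq> 0" using dC abcd by simp
  have "b = 0 \<and> c = 0 \<and> 1*d^2 = \<rho>*a^2"
    by (rule stab_gen[OF da nonsq_nz[OF r]]) (use C abcd in simp)
  then have bc: "b = 0" "d^2 = \<rho>*a^2" by simp_all
  then have "a \<noteq> 0" using da by auto
  then have "(d/a)^2 = \<rho>" using bc(2) by (simp add: power_divide)
  then show False using r by blast
qed



theorem theorem6p7:
  fixes q :: nat and \<rho> :: "'a::{field,finite}"
  assumes "CARD('a) = q" and "odd q" and "q \<ge> 5"
    and "\<not> (\<exists>x. x^2 = \<rho>)"
  defines "P0 \<equiv> (0, 0, 0, 1) :: 'a vec4"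
  defines "l1 \<equiv> span2 P0 (1, 0, 1, 0)"
    and "l2 \<equiv> span2 P0 (1, 0, \<rho>, 0)"
  shows "(UnGamma_lines :: 'a vec4 set set) = Gorbit l1 \<union> Gorbit l2
    \<and> Gorbit l1 \<inter> Gorbit l2 = {}
    \<and> card (Gorbit l1) = (q^3 - q) div 2
    \<and> card (Gorbit l2) = (q^3 - q) div 2
    \<and> Gstab l1 = Gstab l2
    \<and> card (Gstab l1) = 2
    \<and> (\<forall>\<phi>\<in>Gstab l1. \<exists>d\<in>{1, -1}. \<phi> = gmap 1 0 0 d)"
proof -
  have odd: "odd CARD('a)" using assms(1,2) by simp
  have two: "(2::'a) \<noteq> 0" by (rule two_nz[OF odd])
  have \<rho>0: "\<rho> \<noteq> 0" by (rule nonsq_nz[OF assms(4)])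
  have q2: "q \<ge> 2" using assms(3) by simp
  have l1e: "l1 = span2 (0,0,0,1) (1,0,1,0)" unfolding l1_def P0_def ..
  have l2e: "l2 = span2 (0,0,0,1) (1,0,\<rho>,0)" unfolding l2_def P0_def ..
  let ?T = "{A::('a \<times> 'a \<times> 'a \<times> 'a). det2 A \<noteq> 0}"
  have G1: "Gorbit l1 = (\<lambda>A. lmt A ` span2 (0,0,0,1) (1,0,1,0)) ` ?T" unfolding l1e by (rule Gorbit_eq)
  have G2: "Gorbit l2 = (\<lambda>A. lmt A ` span2 (0,0,0,1) (1,0,\<rho>,0)) ` ?T" unfolding l2e by (rule Gorbit_eq)
  have orbU: "lmt A ` span2 (0,0,0,1) (1,0,r,0) \<in> UnGamma_lines" if "det2 A \<noteq> 0" "r \<noteq> 0" for A and r :: 'a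
  proof -
    obtain a b c d where A: "A = (a,b,c,d)" by (cases A rule: prod_cases4)
    have "r \<noteq> 0^2" using that(2) by simp
    then have "span2 (0,0,0,1) (1,0,r,0) \<in> UnGamma_lines" by (rule lineP0_UnGamma)
    moreover have "a*d-b*c \<noteq> 0" using that(1) A by simp
    ultimately show ?thesis unfolding A by (intro unGamma_lmt)
  qed
  have U: "(UnGamma_lines :: 'a vec4 set set) = Gorbit l1 \<union> Gorbit l2"
  proof (intro equalityI subsetI)
    fix L assume "L \<in> (UnGamma_lines :: 'a vec4 set set)"
    then show "L \<in> Gorbit l1 \<union> Gorbit l2" unfolding G1 G2 by (rule UnGamma_sub[OF odd assms(4)])
  next
    fix L assume "L \<in> Gorbit l1 \<union> Gorbit l2"
    then consider A where "det2 A \<noteq> 0" "L = lmt A ` span2 (0,0,0,1) (1,0,1,0)"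
      | A where "det2 A \<noteq> 0" "L = lmt A ` span2 (0,0,0,1) (1,0,\<rho>,0)" unfolding G1 G2 by blast
    then show "L \<in> UnGamma_lines"
    proof cases
      case 1 then show ?thesis using orbU[of A 1] by simp
    next
      case 2 then show ?thesis using orbU[of A \<rho>] \<rho>0 by simp
    qed
  qed
  have D: "Gorbit l1 \<inter> Gorbit l2 = {}" unfolding G1 G2 by (rule orbits_disjoint[OF assms(4)])
  have cT: "card ?T = (q^2 - q) * (q^2 - 1)" using card_GL[where 'a='a] assms(1) by simp
  have C: "card ((\<lambda>A. lmt A ` span2 (0,0,0,1) (1,0,r,0)) ` ?T) = (q^3 - q) div 2" if "r \<noteq> 0" for r :: 'a
  proof -
    have "card ?T = 2 * (q - 1) * card ((\<lambda>A. lmt A ` span2 (0,0,0,1) (1,0,r,0)) ` ?T)"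
      using orbit_card[OF odd that] assms(1) by simp
    then show ?thesis using cT arith_orbit[OF q2] by simp
  qed
  have C1: "card (Gorbit l1) = (q^3 - q) div 2" unfolding G1 by (rule C) simp
  have C2: "card (Gorbit l2) = (q^3 - q) div 2" unfolding G2 by (rule C[OF \<rho>0])
  have S1: "Gstab l1 = {gmap 1 0 0 1, gmap 1 0 0 (-1)}" unfolding l1e by (rule Gstab_eq) simp
  have S2: "Gstab l2 = {gmap 1 0 0 1, gmap 1 0 0 (-1)}" unfolding l2e by (rule Gstab_eq[OF \<rho>0])
  have cS: "card (Gstab l1) = 2" unfolding S1 using gmap_distinct[OF two] by simp
  have F: "\<forall>\<phi>\<in>Gstab l1. \<exists>d\<in>{1, -1}. \<phi> = gmap 1 0 0 d" unfolding S1 by blast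
  show ?thesis using U D C1 C2 S1 S2 cS F by simp
qed


end
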